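(* Let $\mathfrak q$ be a Morse quasi-geodesic in a CAT(0) metric space $(X,\mathrm{dist})$. Then the divergence of $\mathfrak q$ satisfies $\mathrm{Div}^{\mathfrak q}\succeq x^2$, i.e. $x^2\preceq \mathrm{Div}^{\mathfrak q}_\gamma(x)$.
   Context: A $(L,C)$-quasi-geodesic is a map $q$ from a connected subset of $\mathbb R$ to $X$ with $\frac1L|s-t|-C\le\mathrm{dist}(q(s),q(t))\le L|s-t|+C$. A bi-infinite quasi-geodesic $\mathfrak q:\mathbb R\to X$ is Morse if for all $L\ge1,C\ge0$ there is $M=M(L,C)$ such that every $(L,C)$-quasi-geodesic with endpoints on $\mathfrak q$ lies in the $M$-neighborhood of $\mathfrak q$. Divergence of a quasi-geodesic: for fixed $\delta\in(0,1)$, $\gamma\ge0$ and $a,b,c\in X$ with $r=\mathrm{dist}(c,\{a,b\})>0$, $\mathrm{div}_\gamma(a,b,c;\delta)$ is the infimum of lengths of paths joining $a,b$ and avoiding the open ball $B(c,\delta r-\gamma)$; $\mathrm{Div}^{\mathfrak q}_\gamma(r)=\mathrm{div}_\gamma(\mathfrak q(r),\mathfrak q(-r),\mathfrak q(0);\delta)$. Order: $f\preceq g$ if there is $C\ge1$ with $f(x)\le Cg(Cx+C)+Cx+C$ for all $x\ge0$; $g\succeq f$ means $f\preceq g$. *)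

theory Defs
  imports "HOL-Analysis.Analysis" "HOL-Library.Extended_Real"
begin

definition geodesic_seg :: "(real \<Rightarrow> 'a::metric_space) \<Rightarrow> 'a \<Rightarrow> 'a \<Rightarrow> bool" where
  "geodesic_seg g x y \<longleftrightarrow> g 0 = x \<and> g (dist x y) = y \<and>
     (\<forall>s\<in>{0..dist x y}. \<forall>t\<in>{0..dist x y}. dist (g s) (g t) = \<bar>s - t\<bar>)"

definition geodesic_space :: "'a::metric_space itself \<Rightarrow> bool" where
  "geodesic_space TYPE('a) \<longleftrightarrow> (\<forall>x y :: 'a. \<exists>g. geodesic_seg g x y)"

text \<open>Pairs (point on the side [a,b] given by geodesic g, corresponding point on the
  side [a',b'] of the Euclidean comparison triangle in the plane (= complex numbers)).\<close>
definition side_pairs :: "(real \<Rightarrow> 'a::metric_space) \<Rightarrow> 'a \<Rightarrow> 'a \<Rightarrow> complex \<Rightarrow> complex \<Rightarrow> ('a \<times> complex) set" where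
  "side_pairs g a b a' b' =
     {(g s, a' + complex_of_real (s / dist a b) * (b' - a')) | s. s \<in> {0..dist a b}}"

definition CAT0_space :: "'a::metric_space itself \<Rightarrow> bool" where
  "CAT0_space TYPE('a) \<longleftrightarrow> geodesic_space TYPE('a) \<and>
    (\<forall>x y z :: 'a. \<forall>g h k. geodesic_seg g x y \<and> geodesic_seg h y z \<and> geodesic_seg k z x \<longrightarrow>
      (\<forall>x' y' z' :: complex. dist x' y' = dist x y \<and> dist y' z' = dist y z \<and> dist z' x' = dist z x \<longrightarrow>
        (let S = side_pairs g x y x' y' \<union> side_pairs h y z y' z' \<union> side_pairs k z x z' x' in
          \<forall>(p, p') \<in> S. \<forall>(r, r') \<in> S. dist p r \<le> dist p' r')))"

definition quasi_geodesic :: "real \<Rightarrow> real \<Rightarrow> real set \<Rightarrow> (real \<Rightarrow> 'a::metric_space) \<Rightarrow> bool" where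
  "quasi_geodesic L C I p \<longleftrightarrow> L \<ge> 1 \<and> C \<ge> 0 \<and> connected I \<and>
     (\<forall>s\<in>I. \<forall>t\<in>I. \<bar>s - t\<bar> / L - C \<le> dist (p s) (p t) \<and> dist (p s) (p t) \<le> L * \<bar>s - t\<bar> + C)"

definition morse_quasi_geodesic :: "(real \<Rightarrow> 'a::metric_space) \<Rightarrow> bool" where
  "morse_quasi_geodesic q \<longleftrightarrow> (\<exists>L0 C0. quasi_geodesic L0 C0 UNIV q) \<and>
     (\<forall>L\<ge>1. \<forall>C\<ge>0. \<exists>M. \<forall>a b p. a \<le> b \<longrightarrow> quasi_geodesic L C {a..b} p \<longrightarrow>
        p a \<in> range q \<longrightarrow> p b \<in> range q \<longrightarrow>
        (\<forall>t\<in>{a..b}. \<exists>s. dist (p t) (q s) \<le> M))"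

definition path_length :: "(real \<Rightarrow> 'a::metric_space) \<Rightarrow> ereal" where
  "path_length p = (SUP (n, t) \<in> {(n, t). t 0 = 0 \<and> t n = (1::real) \<and> (\<forall>i<n. t i \<le> t (Suc i))}.
       ereal (\<Sum>i<n. dist (p (t i)) (p (t (Suc i)))))"

text \<open>div_gamma(a,b,c;delta): infimum of lengths of paths from a to b avoiding the open ball
  B(c, delta r - gamma), r = dist(c,{a,b}). (Infimum of the empty set is \<infinity>.)\<close>
definition divg :: "real \<Rightarrow> real \<Rightarrow> 'a::metric_space \<Rightarrow> 'a \<Rightarrow> 'a \<Rightarrow> ereal" where
  "divg \<gamma> \<delta> a b c =
     (let r = min (dist c a) (dist c b) in
       Inf {path_length p | p. continuous_on {0..1} p \<and> p 0 = a \<and> p 1 = b \<and>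
              p ` {0..1} \<inter> ball c (\<delta> * r - \<gamma>) = {}})"

definition Div :: "(real \<Rightarrow> 'a::metric_space) \<Rightarrow> real \<Rightarrow> real \<Rightarrow> real \<Rightarrow> ereal" where
  "Div q \<gamma> \<delta> r = divg \<gamma> \<delta> (q r) (q (- r)) (q 0)"

definition preceq :: "(real \<Rightarrow> ereal) \<Rightarrow> (real \<Rightarrow> ereal) \<Rightarrow> bool" where
  "preceq f g \<longleftrightarrow> (\<exists>C::real\<ge>1. \<forall>x\<ge>0.
      f x \<le> ereal C * g (C * x + C) + ereal (C * x + C))"

end

theory Submission
  imports Defs
begin
lemma cmp_tri:
  fixes \<alpha> \<beta> \<gamma> :: real
  assumes "0 \<le> \<alpha>" "0 \<le> \<beta>" "0 \<le> \<gamma>" "\<alpha> \<le> \<beta> + \<gamma>" "\<beta> \<le> \<alpha> + \<gamma>" "\<gamma> \<le> \<alpha> + \<beta>"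
  shows "\<exists>x' y' z' :: complex. dist x' y' = \<alpha> \<and> dist y' z' = \<beta> \<and> dist z' x' = \<gamma>"
proof (cases "\<alpha> = 0")
  case True
  then have "\<beta> = \<gamma>" using assms by auto
  then show ?thesis using True assms
    by (intro exI[of _ 0] exI[of _ "complex_of_real \<gamma>"]) (auto simp: dist_norm)
next
  case False
  then have ap: "\<alpha> > 0" using assms by auto
  define A where "A = (\<alpha>^2 + \<gamma>^2 - \<beta>^2) / (2*\<alpha>)"
  have "\<bar>\<alpha>^2 + \<gamma>^2 - \<beta>^2\<bar> \<le> 2*\<alpha>*\<gamma>"
  proof -
    have "\<beta>^2 \<le> (\<alpha>+\<gamma>)^2" using assms by (intro power_mono) auto
    moreover have "(\<alpha>-\<gamma>)^2 \<le> \<beta>^2"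
    proof -
      have "\<bar>\<alpha>-\<gamma>\<bar> \<le> \<beta>" using assms by auto
      hence "\<bar>\<alpha>-\<gamma>\<bar>^2 \<le> \<beta>^2" by (intro power_mono) auto
      thus ?thesis by simp
    qed
    ultimately show ?thesis by (auto simp: power2_eq_square algebra_simps abs_le_iff)
  qed
  hence "\<bar>A\<bar> \<le> \<gamma>" using ap unfolding A_def by (auto simp: abs_divide field_simps)
  hence A2: "A^2 \<le> \<gamma>^2" by (metis abs_le_square_iff abs_of_nonneg assms(3))
  define B where "B = sqrt (\<gamma>^2 - A^2)"
  have B2: "B^2 = \<gamma>^2 - A^2" unfolding B_def using A2 by simp
  define z where "z = Complex A B"
  have "cmod z = \<gamma>"
    unfolding z_def cmod_def using B2 assms by simp
  moreover have "cmod (complex_of_real \<alpha> - z) = \<beta>"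
  proof -
    have "(cmod (complex_of_real \<alpha> - z))^2 = (\<alpha> - A)^2 + B^2"
      unfolding z_def cmod_def by (simp add: power2_eq_square)
    also have "\<dots> = \<beta>^2" using B2 ap unfolding A_def by (simp add: field_simps power2_eq_square)
    finally show ?thesis using assms(2) by (metis norm_ge_zero power2_eq_iff_nonneg)
  qed
  ultimately show ?thesis using assms
    by (intro exI[of _ 0] exI[of _ "complex_of_real \<alpha>"] exI[of _ z])
       (auto simp: dist_norm norm_minus_commute)
qed

lemma eucl_stewart:
  fixes a b p :: complex and l :: real
  shows "(dist p (a + complex_of_real l * (b - a)))^2 =
    (1-l) * (dist p a)^2 + l * (dist p b)^2 - l*(1-l)*(dist a b)^2"
  unfolding dist_norm cmod_power2 by (simp add: power2_eq_square algebra_simps)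

lemma eucl_scale:
  fixes v p w :: complex and l :: real
  assumes "0 \<le> l"
  shows "dist (v + complex_of_real l * (p - v)) (v + complex_of_real l * (w - v)) = l * dist p w"
proof -
  have "(v + complex_of_real l * (p - v)) - (v + complex_of_real l * (w - v)) = complex_of_real l * (p - w)"
    by (simp add: algebra_simps)
  thus ?thesis using assms by (simp add: dist_norm norm_mult)
qed

lemma geo_dist:
  assumes "geodesic_seg g x y" "s \<in> {0..dist x y}" "t \<in> {0..dist x y}"
  shows "dist (g s) (g t) = \<bar>s - t\<bar>"
  using assms unfolding geodesic_seg_def by blast

lemma geo_0: "geodesic_seg g x y \<Longrightarrow> g 0 = x" unfolding geodesic_seg_def by blast
lemma geo_1: "geodesic_seg g x y \<Longrightarrow> g (dist x y) = y" unfolding geodesic_seg_def by blast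

lemma geo_distx:
  assumes "geodesic_seg g x y" "s \<in> {0..dist x y}"
  shows "dist x (g s) = s"
proof -
  have "dist (g 0) (g s) = \<bar>0 - s\<bar>" using geo_dist[OF assms(1) _ assms(2)] by simp
  thus ?thesis using geo_0[OF assms(1)] assms(2) by simp
qed

lemma geo_disty:
  assumes "geodesic_seg g x y" "s \<in> {0..dist x y}"
  shows "dist (g s) y = dist x y - s"
proof -
  have "dist (g s) (g (dist x y)) = \<bar>s - dist x y\<bar>" using geo_dist[OF assms(1) assms(2)] by simp
  thus ?thesis using geo_1[OF assms(1)] assms(2) by simp
qed

lemma geo_rev:
  assumes "geodesic_seg g x y"
  shows "geodesic_seg (\<lambda>s. g (dist x y - s)) y x"
  using assms unfolding geodesic_seg_def by (auto simp: dist_commute)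

lemma geo_cont:
  assumes "geodesic_seg g x y"
  shows "continuous_on {0..dist x y} g"
proof -
  have "1-lipschitz_on {0..dist x y} g"
    unfolding lipschitz_on_def using geo_dist[OF assms] by (simp add: dist_real_def)
  thus ?thesis by (rule lipschitz_on_continuous_on)
qed

lemma cat0_geo: "CAT0_space TYPE('a::metric_space) \<Longrightarrow> \<exists>g. geodesic_seg g (x::'a) y"
  unfolding CAT0_space_def geodesic_space_def by blast

lemma cat0_cmp:
  fixes x y z :: "'a::metric_space"
  assumes "CAT0_space TYPE('a)"
    "geodesic_seg g x y" "geodesic_seg h y z" "geodesic_seg k z x"
    "dist x' y' = dist x y" "dist y' z' = dist y z" "dist z' x' = dist z x"
    "(p, p') \<in> side_pairs g x y x' y' \<union> side_pairs h y z y' z' \<union> side_pairs k z x z' x'"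
    "(r, r') \<in> side_pairs g x y x' y' \<union> side_pairs h y z y' z' \<union> side_pairs k z x z' x'"
  shows "dist p r \<le> dist p' r'"
proof -
  have "\<forall>(p, p') \<in> side_pairs g x y x' y' \<union> side_pairs h y z y' z' \<union> side_pairs k z x z' x'.
        \<forall>(r, r') \<in> side_pairs g x y x' y' \<union> side_pairs h y z y' z' \<union> side_pairs k z x z' x'. dist p r \<le> dist p' r'"
    using assms(1) unfolding CAT0_space_def Let_def using assms(2-7) by blast
  thus ?thesis using assms(8,9) by blast
qed

lemma cmp_tri_pts:
  fixes x y z :: "'a::metric_space"
  shows "\<exists>x' y' z' :: complex. dist x' y' = dist x y \<and> dist y' z' = dist y z \<and> dist z' x' = dist z x"
  apply (rule cmp_tri)
  apply simp_all
  apply (metis dist_commute dist_triangle add.commute)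
  apply (metis dist_commute dist_triangle add.commute)
  apply (metis dist_commute dist_triangle add.commute)
  done

lemma side_pair_start:
  assumes "geodesic_seg g x y" "dist x' y' = dist x y" "s \<in> {0..dist x y}"
  shows "(g s, x' + complex_of_real (s / dist x y) * (y' - x')) \<in> side_pairs g x y x' y'"
  using assms unfolding side_pairs_def by blast

lemma side_pair_frac:
  assumes "geodesic_seg g x y" "dist x' y' = dist x y" "0 \<le> l" "l \<le> 1"
  shows "(g (l * dist x y), x' + complex_of_real l * (y' - x')) \<in> side_pairs g x y x' y'"
proof (cases "dist x y = 0")
  case True
  then have "x' = y'" using assms by simp
  then have "(g (l * dist x y), x' + complex_of_real l * (y' - x')) = (g 0, x' + complex_of_real (0 / dist x y) * (y' - x'))"
    using True by simp
  thus ?thesis using side_pair_start[OF assms(1,2), of 0] by (metis atLeastAtMost_iff order_refl zero_le_dist)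
next
  case False
  then have "l * dist x y / dist x y = l" by simp
  moreover have "l * dist x y \<in> {0..dist x y}" using assms by (simp add: mult_left_le_one_le)
  ultimately show ?thesis using side_pair_start[OF assms(1,2), of "l * dist x y"] by simp
qed

lemma stewart:
  fixes p a b :: "'a::metric_space"
  assumes "CAT0_space TYPE('a)" "geodesic_seg g a b" "0 \<le> l" "l \<le> 1"
  shows "(dist p (g (l * dist a b)))^2 \<le> (1-l) * (dist p a)^2 + l * (dist p b)^2 - l*(1-l)*(dist a b)^2"
proof -
  obtain h where h: "geodesic_seg h b p" using cat0_geo[OF assms(1)] by blast
  obtain k where k: "geodesic_seg k p a" using cat0_geo[OF assms(1)] by blast
  obtain a' b' p' :: complex where c: "dist a' b' = dist a b" "dist b' p' = dist b p" "dist p' a' = dist p a"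
    using cmp_tri_pts by blast
  have 1: "(g (l * dist a b), a' + complex_of_real l * (b' - a')) \<in> side_pairs g a b a' b'"
    by (rule side_pair_frac[OF assms(2) c(1) assms(3,4)])
  have "(h (1 * dist b p), b' + complex_of_real 1 * (p' - b')) \<in> side_pairs h b p b' p'"
    by (rule side_pair_frac[OF h c(2)]) auto
  hence 2: "(p, p') \<in> side_pairs h b p b' p'" using geo_1[OF h] by simp
  have "dist p (g (l * dist a b)) \<le> dist p' (a' + complex_of_real l * (b' - a'))"
    by (rule cat0_cmp[OF assms(1,2) h k c]) (use 1 2 in auto)
  hence "(dist p (g (l * dist a b)))^2 \<le> (dist p' (a' + complex_of_real l * (b' - a')))^2"
    by (simp add: power_mono)
  also have "\<dots> = (1-l) * (dist p a)^2 + l * (dist p b)^2 - l*(1-l)*(dist a b)^2"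
    unfolding eucl_stewart using c by (simp add: dist_commute)
  finally show ?thesis .
qed

lemma cat0_vertex:
  fixes v p w :: "'a::metric_space"
  assumes "CAT0_space TYPE('a)" "geodesic_seg g1 v p" "geodesic_seg g2 v w" "0 \<le> l" "l \<le> 1"
  shows "dist (g1 (l * dist v p)) (g2 (l * dist v w)) \<le> l * dist p w"
proof -
  obtain h where h: "geodesic_seg h p w" using cat0_geo[OF assms(1)] by blast
  define k where "k = (\<lambda>s. g2 (dist v w - s))"
  have k: "geodesic_seg k w v" unfolding k_def by (rule geo_rev[OF assms(3)])
  obtain v' p' w' :: complex where c: "dist v' p' = dist v p" "dist p' w' = dist p w" "dist w' v' = dist w v"
    using cmp_tri_pts by blast
  have 1: "(g1 (l * dist v p), v' + complex_of_real l * (p' - v')) \<in> side_pairs g1 v p v' p'"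
    by (rule side_pair_frac[OF assms(2) c(1) assms(4,5)])
  have "(k ((1-l) * dist w v), w' + complex_of_real (1-l) * (v' - w')) \<in> side_pairs k w v w' v'"
    by (rule side_pair_frac[OF k c(3)]) (use assms in auto)
  moreover have "k ((1-l) * dist w v) = g2 (l * dist v w)"
    unfolding k_def by (simp add: dist_commute algebra_simps)
  moreover have "w' + complex_of_real (1-l) * (v' - w') = v' + complex_of_real l * (w' - v')"
    by (simp add: algebra_simps)
  ultimately have 2: "(g2 (l * dist v w), v' + complex_of_real l * (w' - v')) \<in> side_pairs k w v w' v'"
    by simp
  have "dist (g1 (l * dist v p)) (g2 (l * dist v w)) \<le> dist (v' + complex_of_real l * (p' - v')) (v' + complex_of_real l * (w' - v'))"
    by (rule cat0_cmp[OF assms(1,2) h k c]) (use 1 2 in auto)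
  also have "\<dots> = l * dist p w" using eucl_scale[OF assms(4)] c by simp
  finally show ?thesis .
qed

lemma geo_sub:
  assumes "geodesic_seg g a b" "t \<in> {0..dist a b}" "u \<in> {0..dist a b}"
  shows "geodesic_seg (\<lambda>s. g (t + s * (if t \<le> u then 1 else -1))) (g t) (g u)"
proof -
  have du: "dist (g t) (g u) = \<bar>t - u\<bar>" using geo_dist[OF assms] .
  show ?thesis unfolding geodesic_seg_def du
  proof (intro conjI ballI)
    show "g (t + 0 * (if t \<le> u then 1 else - 1)) = g t" by simp
    show "g (t + \<bar>t - u\<bar> * (if t \<le> u then 1 else - 1)) = g u" by (cases "t \<le> u") auto
    fix s s' assume s: "s \<in> {0..\<bar>t - u\<bar>}" and s': "s' \<in> {0..\<bar>t - u\<bar>}"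
    have i1: "t + s * (if t \<le> u then 1 else - 1) \<in> {0..dist a b}"
      using s assms by (cases "t \<le> u") auto
    have i2: "t + s' * (if t \<le> u then 1 else - 1) \<in> {0..dist a b}"
      using s' assms by (cases "t \<le> u") auto
    show "dist (g (t + s * (if t \<le> u then 1 else - 1))) (g (t + s' * (if t \<le> u then 1 else - 1))) = \<bar>s - s'\<bar>"
      using geo_dist[OF assms(1) i1 i2] by (cases "t \<le> u") (auto simp: algebra_simps abs_minus_commute)
  qed
qed

lemma sq_sum: "((p::real) + q)^2 \<le> 2 * p^2 + 2 * q^2"
proof -
  have "0 \<le> (p - q)^2" by simp
  thus ?thesis unfolding power2_eq_square by (simp add: algebra_simps)
qed

lemma quad_ineq:
  fixes x y x' y' :: "'a::metric_space"
  assumes "CAT0_space TYPE('a)"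
  shows "(dist x y')^2 + (dist y x')^2 \<le> (dist x x')^2 + (dist y y')^2 + (dist x y)^2 + (dist x' y')^2"
proof -
  obtain g where g: "geodesic_seg g x y'" using cat0_geo[OF assms] by blast
  define m where "m = g ((1/2) * dist x y')"
  have 1: "(dist x' m)^2 \<le> (1/2) * (dist x' x)^2 + (1/2) * (dist x' y')^2 - (1/4) * (dist x y')^2"
    using stewart[OF assms g, of "1/2" x'] unfolding m_def by simp
  have 2: "(dist y m)^2 \<le> (1/2) * (dist y x)^2 + (1/2) * (dist y y')^2 - (1/4) * (dist x y')^2"
    using stewart[OF assms g, of "1/2" y] unfolding m_def by simp
  have "dist y x' \<le> dist x' m + dist y m" by (metis dist_commute dist_triangle)
  hence "(dist y x')^2 \<le> (dist x' m + dist y m)^2" by (simp add: power_mono)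
  also have "\<dots> \<le> 2 * (dist x' m)^2 + 2 * (dist y m)^2"
    by (rule sq_sum)
  finally show ?thesis using 1 2 by (simp add: dist_commute)
qed

locale seg =
  fixes \<sigma> :: "real \<Rightarrow> 'a::metric_space" and a b :: 'a
  assumes cat0: "CAT0_space TYPE('a)" and sg: "geodesic_seg \<sigma> a b"
begin

abbreviation "D \<equiv> dist a b"

lemma sd: "t \<in> {0..D} \<Longrightarrow> u \<in> {0..D} \<Longrightarrow> dist (\<sigma> t) (\<sigma> u) = \<bar>t - u\<bar>"
  using geo_dist[OF sg] by blast

lemma min_ex: "\<exists>t\<in>{0..D}. \<forall>u\<in>{0..D}. dist x (\<sigma> t) \<le> dist x (\<sigma> u)"
proof -
  have "continuous_on {0..D} (\<lambda>t. dist x (\<sigma> t))"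
    by (intro continuous_intros geo_cont[OF sg])
  from continuous_attains_inf[OF compact_Icc _ this] show ?thesis by auto
qed

definition pr :: "'a \<Rightarrow> real" where
  "pr x = (SOME t. t \<in> {0..D} \<and> (\<forall>u\<in>{0..D}. dist x (\<sigma> t) \<le> dist x (\<sigma> u)))"

lemma pr: "pr x \<in> {0..D}" "\<And>u. u \<in> {0..D} \<Longrightarrow> dist x (\<sigma> (pr x)) \<le> dist x (\<sigma> u)"
proof -
  have "pr x \<in> {0..D} \<and> (\<forall>u\<in>{0..D}. dist x (\<sigma> (pr x)) \<le> dist x (\<sigma> u))"
    unfolding pr_def by (rule someI_ex) (use min_ex in blast)
  thus "pr x \<in> {0..D}" "\<And>u. u \<in> {0..D} \<Longrightarrow> dist x (\<sigma> (pr x)) \<le> dist x (\<sigma> u)" by auto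
qed

definition hh :: "'a \<Rightarrow> real" where "hh x = dist x (\<sigma> (pr x))"

lemma hh_le: "u \<in> {0..D} \<Longrightarrow> hh x \<le> dist x (\<sigma> u)"
  unfolding hh_def using pr by blast

lemma hh_nn: "0 \<le> hh x" unfolding hh_def by simp

lemma right_angle_gen:
  assumes t: "t \<in> {0..D}" and tmin: "\<And>v. v \<in> {0..D} \<Longrightarrow> dist x (\<sigma> t) \<le> dist x (\<sigma> v)"
    and u: "u \<in> {0..D}"
  shows "(dist x (\<sigma> u))^2 \<ge> (dist x (\<sigma> t))^2 + (u - t)^2"
proof (rule ccontr)
  assume "\<not> ?thesis"
  then have lt: "(dist x (\<sigma> u))^2 < (dist x (\<sigma> t))^2 + (u - t)^2" by simp
  then have ut: "u \<noteq> t" by auto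
  define H where "H = dist x (\<sigma> t)"
  define E where "E = (dist x (\<sigma> u))^2"
  define W where "W = (u - t)^2"
  have Wp: "W > 0" unfolding W_def using ut by simp
  define e where "e = min 1 ((H^2 + W - E) / (2 * W))"
  have ep: "0 < e" "e \<le> 1" unfolding e_def using lt Wp unfolding H_def E_def W_def by auto
  let ?g = "\<lambda>s. \<sigma> (t + s * (if t \<le> u then 1 else -1))"
  have g: "geodesic_seg ?g (\<sigma> t) (\<sigma> u)" by (rule geo_sub[OF sg t u])
  have dtu: "dist (\<sigma> t) (\<sigma> u) = \<bar>t - u\<bar>" using sd t u by blast
  have st0: "(dist x (?g (e * dist (\<sigma> t) (\<sigma> u))))^2 \<le> (1-e) * (dist x (\<sigma> t))^2 + e * (dist x (\<sigma> u))^2 - e*(1-e)*(dist (\<sigma> t) (\<sigma> u))^2"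
    by (rule stewart[OF cat0 g]) (use ep in auto)
  have "(dist (\<sigma> t) (\<sigma> u))^2 = W" unfolding dtu W_def by (simp add: power2_abs power2_commute)
  hence st: "(dist x (?g (e * dist (\<sigma> t) (\<sigma> u))))^2 \<le> (1-e) * H^2 + e * E - e*(1-e)*W"
    using st0 unfolding H_def E_def by simp
  have "t + e * \<bar>t - u\<bar> * (if t \<le> u then 1 else -1) \<in> {0..D}"
  proof (cases "t \<le> u")
    case True
    have "e * (u - t) \<le> u - t" using ep True by (simp add: mult_left_le_one_le)
    moreover have "0 \<le> e * (u - t)" using ep True by simp
    ultimately show ?thesis using True t u by auto
  next
    case False
    have "e * (t - u) \<le> t - u" using ep False by (simp add: mult_left_le_one_le)
    moreover have "0 \<le> e * (t - u)" using ep False by simp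
    ultimately have "0 \<le> t - e * (t - u)" "t - e * (t - u) \<le> D" using t u by auto
    thus ?thesis using False by (simp add: algebra_simps)
  qed
  hence "H \<le> dist x (?g (e * dist (\<sigma> t) (\<sigma> u)))" unfolding H_def dtu using tmin by simp
  hence "H^2 \<le> (dist x (?g (e * dist (\<sigma> t) (\<sigma> u))))^2" unfolding H_def by (simp add: power_mono)
  with st have "H^2 \<le> (1-e) * H^2 + e * E - e*(1-e)*W" by linarith
  hence "e * (H^2 + (1-e)*W) \<le> e * E" by (simp add: algebra_simps)
  hence "H^2 + (1-e)*W \<le> E" using ep by (simp add: mult_le_cancel_left_pos)
  hence "H^2 \<le> E - (1-e)*W" by simp
  hence A: "H^2 + W - E \<le> e * W" by (simp add: algebra_simps)
  have B: "e * W \<le> (H^2 + W - E) / 2"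
  proof -
    have "e \<le> (H^2 + W - E) / (2 * W)" unfolding e_def by simp
    hence "e * (2 * W) \<le> H^2 + W - E" using Wp by (simp add: le_divide_eq)
    thus ?thesis by simp
  qed
  have C: "H^2 + W - E > 0" using lt unfolding H_def E_def W_def by simp
  have "H^2 + W - E \<le> (H^2 + W - E) / 2" using order_trans[OF A B] .
  with C show False by simp
qed

lemma right_angle: "u \<in> {0..D} \<Longrightarrow> (dist x (\<sigma> u))^2 \<ge> (hh x)^2 + (u - pr x)^2"
  unfolding hh_def by (rule right_angle_gen[OF pr(1) pr(2)])

lemma pr_unique:
  assumes t: "t \<in> {0..D}" and tmin: "\<And>v. v \<in> {0..D} \<Longrightarrow> dist x (\<sigma> t) \<le> dist x (\<sigma> v)"
  shows "pr x = t"
proof -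
  have "(dist x (\<sigma> (pr x)))^2 \<ge> (dist x (\<sigma> t))^2 + (pr x - t)^2"
    by (rule right_angle_gen[OF t tmin pr(1)])
  moreover have "dist x (\<sigma> t) \<le> dist x (\<sigma> (pr x))" using tmin pr(1) by blast
  moreover have "dist x (\<sigma> (pr x)) \<le> dist x (\<sigma> t)" using pr(2) t by blast
  ultimately have "(pr x - t)^2 \<le> 0" by simp
  thus ?thesis by simp
qed

lemma pr_sigma: "u \<in> {0..D} \<Longrightarrow> pr (\<sigma> u) = u"
  by (rule pr_unique) auto

lemma hh_sigma: "u \<in> {0..D} \<Longrightarrow> hh (\<sigma> u) = 0"
  unfolding hh_def using pr_sigma by simp

lemma pr_a: "pr a = 0" using pr_sigma[of 0] geo_0[OF sg] by simp
lemma pr_b: "pr b = D" using pr_sigma[of D] geo_1[OF sg] by simp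

lemma pr_lip: "\<bar>pr x - pr y\<bar> \<le> dist x y"
proof -
  let ?x' = "\<sigma> (pr x)" and ?y' = "\<sigma> (pr y)"
  have q: "(dist x ?y')^2 + (dist y ?x')^2 \<le> (dist x ?x')^2 + (dist y ?y')^2 + (dist x y)^2 + (dist ?x' ?y')^2"
    by (rule quad_ineq[OF cat0])
  have d: "dist ?x' ?y' = \<bar>pr x - pr y\<bar>" using sd pr(1) by blast
  have 1: "(dist x ?y')^2 \<ge> (hh x)^2 + (pr y - pr x)^2" by (rule right_angle[OF pr(1)])
  have 2: "(dist y ?x')^2 \<ge> (hh y)^2 + (pr x - pr y)^2" by (rule right_angle[OF pr(1)])
  have "(pr x - pr y)^2 \<le> (dist x y)^2"
    using q 1 2 d unfolding hh_def by (simp add: power2_abs power2_commute)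
  thus ?thesis using real_le_rsqrt by (metis abs_le_square_iff abs_of_nonneg zero_le_dist)
qed

lemma pr_cont: "continuous_on S pr"
proof -
  have "1-lipschitz_on S pr" unfolding lipschitz_on_def using pr_lip by (simp add: dist_real_def)
  thus ?thesis by (rule lipschitz_on_continuous_on)
qed

lemma hh_lip: "hh x \<le> dist x y + hh y"
proof -
  have "hh x \<le> dist x (\<sigma> (pr y))" by (rule hh_le[OF pr(1)])
  also have "\<dots> \<le> dist x y + hh y" unfolding hh_def by (rule dist_triangle)
  finally show ?thesis .
qed

lemma hh_lip': "\<bar>hh x - hh y\<bar> \<le> dist x y"
  using hh_lip[of x y] hh_lip[of y x] by (simp add: dist_commute abs_le_iff)

lemma sigma_lower: "u \<in> {0..D} \<Longrightarrow> dist x (\<sigma> u) \<ge> (hh x + \<bar>u - pr x\<bar>) / sqrt 2"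
proof -
  assume u: "u \<in> {0..D}"
  have "(hh x + \<bar>u - pr x\<bar>)^2 \<le> 2 * ((hh x)^2 + (u - pr x)^2)"
    using sq_sum[of "hh x" "\<bar>u - pr x\<bar>"] by (simp add: power2_abs)
  also have "\<dots> \<le> 2 * (dist x (\<sigma> u))^2" using right_angle[OF u, of x] by simp
  finally have "(hh x + \<bar>u - pr x\<bar>)^2 \<le> (sqrt 2 * dist x (\<sigma> u))^2" by (simp add: power_mult_distrib)
  hence "hh x + \<bar>u - pr x\<bar> \<le> sqrt 2 * dist x (\<sigma> u)"
    by (rule power2_le_imp_le) simp
  thus ?thesis by (simp add: divide_simps mult.commute)
qed

lemma vertical:
  assumes c: "geodesic_seg c (\<sigma> (pr x)) x" and s: "s \<in> {0..hh x}"
  shows "pr (c s) = pr x" "hh (c s) = s"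
proof -
  have dd: "dist (\<sigma> (pr x)) x = hh x" unfolding hh_def by (simp add: dist_commute)
  have s': "s \<in> {0..dist (\<sigma> (pr x)) x}" using s dd by simp
  have cs: "dist (\<sigma> (pr x)) (c s) = s" using geo_distx[OF c s'] .
  have cx: "dist (c s) x = hh x - s" using geo_disty[OF c s'] dd by simp
  have "\<And>v. v \<in> {0..D} \<Longrightarrow> dist (c s) (\<sigma> (pr x)) \<le> dist (c s) (\<sigma> v)"
  proof -
    fix v assume v: "v \<in> {0..D}"
    have "hh x \<le> dist x (\<sigma> v)" by (rule hh_le[OF v])
    also have "\<dots> \<le> dist x (c s) + dist (c s) (\<sigma> v)" by (rule dist_triangle)
    finally show "dist (c s) (\<sigma> (pr x)) \<le> dist (c s) (\<sigma> v)" using cs cx by (simp add: dist_commute)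
  qed
  hence "pr (c s) = pr x" by (intro pr_unique pr(1)) 
  thus "pr (c s) = pr x" .
  thus "hh (c s) = s" unfolding hh_def using cs by (simp add: dist_commute)
qed

end

definition MM :: "(real \<Rightarrow> 'a::metric_space) \<Rightarrow> real \<Rightarrow> real \<Rightarrow> real" where
  "MM q L C = (SOME M. \<forall>a b p. a \<le> b \<longrightarrow> quasi_geodesic L C {a..b} p \<longrightarrow>
        p a \<in> range q \<longrightarrow> p b \<in> range q \<longrightarrow> (\<forall>t\<in>{a..b}. \<exists>s. dist (p t) (q s) \<le> M))"

lemma morse_M:
  assumes "morse_quasi_geodesic q" "L \<ge> 1" "C \<ge> 0" "a \<le> b" "quasi_geodesic L C {a..b} p"
    "p a \<in> range q" "p b \<in> range q" "t \<in> {a..b}"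
  shows "\<exists>s. dist (p t) (q s) \<le> MM q L C"
proof -
  have "\<exists>M. \<forall>a b p. a \<le> b \<longrightarrow> quasi_geodesic L C {a..b} p \<longrightarrow>
        p a \<in> range q \<longrightarrow> p b \<in> range q \<longrightarrow> (\<forall>t\<in>{a..b}. \<exists>s. dist (p t) (q s) \<le> M)"
    using assms(1-3) unfolding morse_quasi_geodesic_def by blast
  hence "\<forall>a b p. a \<le> b \<longrightarrow> quasi_geodesic L C {a..b} p \<longrightarrow>
        p a \<in> range q \<longrightarrow> p b \<in> range q \<longrightarrow> (\<forall>t\<in>{a..b}. \<exists>s. dist (p t) (q s) \<le> MM q L C)"
    unfolding MM_def by (rule someI_ex)
  thus ?thesis using assms(4-8) by blast
qed

lemma geo_quasi:
  assumes "geodesic_seg g x y"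
  shows "quasi_geodesic 1 0 {0..dist x y} g"
  unfolding quasi_geodesic_def using geo_dist[OF assms] by auto

locale mseg = seg \<sigma> a b for \<sigma> :: "real \<Rightarrow> 'a::metric_space" and a b +
  fixes q :: "real \<Rightarrow> 'a" and r L0 C0 :: real
  assumes morse: "morse_quasi_geodesic q"
    and qg: "quasi_geodesic L0 C0 UNIV q"
    and r0: "0 \<le> r"
    and aq: "a = q r" and bq: "b = q (-r)"
begin

definition "M1 = MM q 1 0"
definition "Hc = L0 * (L0 * (2 * M1 + 1 + C0)) + C0 + M1"

lemma L0: "L0 \<ge> 1" and C0: "C0 \<ge> 0" using qg unfolding quasi_geodesic_def by auto

lemma q_up: "dist (q s) (q t) \<le> L0 * \<bar>s - t\<bar> + C0"
  using qg unfolding quasi_geodesic_def by auto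
lemma q_low: "\<bar>s - t\<bar> / L0 - C0 \<le> dist (q s) (q t)"
  using qg unfolding quasi_geodesic_def by auto
lemma q_low': "\<bar>s - t\<bar> \<le> L0 * (dist (q s) (q t) + C0)"
proof -
  have "\<bar>s - t\<bar> / L0 \<le> dist (q s) (q t) + C0" using q_low[of s t] by simp
  thus ?thesis using L0 by (simp add: divide_le_eq mult.commute)
qed

lemma s0q: "\<sigma> 0 = q r" using geo_0[OF sg] aq by simp
lemma sDq: "\<sigma> D = q (-r)" using geo_1[OF sg] bq by simp

lemma sig_near: "t \<in> {0..D} \<Longrightarrow> \<exists>s. dist (\<sigma> t) (q s) \<le> M1"
  unfolding M1_def
  by (rule morse_M[OF morse _ _ _ geo_quasi[OF sg]]) (auto simp: s0q sDq)

lemma M1_nn: "0 \<le> M1"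
proof -
  obtain s where "dist (\<sigma> 0) (q s) \<le> M1" using sig_near[of 0] by auto
  thus ?thesis by (meson order_trans zero_le_dist)
qed

lemma q_near_sig:
  assumes s0: "s0 \<in> {-r..r}"
  shows "\<exists>t\<in>{0..D}. dist (q s0) (\<sigma> t) \<le> Hc"
proof -
  define Tm where "Tm = {t\<in>{0..D}. \<exists>s\<le>s0. dist (\<sigma> t) (q s) \<le> M1}"
  have DT: "D \<in> Tm" unfolding Tm_def using s0 M1_nn sDq
    by (auto intro!: exI[of _ "-r"])
  have bdd: "bdd_below Tm" unfolding Tm_def by (rule bdd_belowI[of _ 0]) auto
  define ts where "ts = Inf Tm"
  have ts0: "0 \<le> ts" unfolding ts_def using DT by (intro cInf_greatest) (auto simp: Tm_def)
  obtain t1 where t1: "t1 \<in> Tm" "t1 < ts + 1/2"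
    using cInf_lessD[of Tm "ts + 1/2"] DT unfolding ts_def by force
  define t2 where "t2 = (if ts \<le> 1/4 then 0 else ts - 1/4)"
  have t2D: "t2 \<in> {0..D}" unfolding t2_def using t1 ts0 cInf_lower[OF t1(1) bdd]
    by (auto simp: Tm_def ts_def)
  have t2s: "t2 \<le> ts" "ts - 1/4 \<le> t2" unfolding t2_def using ts0 by auto
  have "\<exists>s\<ge>s0. dist (\<sigma> t2) (q s) \<le> M1"
  proof (cases "t2 = 0")
    case True
    then show ?thesis using s0q s0 M1_nn by (auto intro!: exI[of _ r])
  next
    case False
    then have "t2 < ts" unfolding t2_def by auto
    then have "t2 \<notin> Tm" using cInf_lower[OF _ bdd] unfolding ts_def by force
    moreover obtain s where "dist (\<sigma> t2) (q s) \<le> M1" using sig_near[OF t2D] by auto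
    ultimately have "\<not> s \<le> s0" using t2D unfolding Tm_def by blast
    thus ?thesis using \<open>dist (\<sigma> t2) (q s) \<le> M1\<close> by (auto intro!: exI[of _ s])
  qed
  then obtain s2 where s2: "s2 \<ge> s0" "dist (\<sigma> t2) (q s2) \<le> M1" by auto
  obtain s1 where s1: "s1 \<le> s0" "dist (\<sigma> t1) (q s1) \<le> M1" using t1(1) unfolding Tm_def by auto
  have t1D: "t1 \<in> {0..D}" using t1(1) unfolding Tm_def by auto
  have "dist (\<sigma> t1) (\<sigma> t2) \<le> 1" using sd[OF t1D t2D] t1 t2s cInf_lower[OF t1(1) bdd] unfolding ts_def by auto
  moreover have "dist (q s1) (q s2) \<le> dist (q s1) (\<sigma> t1) + dist (\<sigma> t1) (\<sigma> t2) + dist (\<sigma> t2) (q s2)"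
    by (metis add.commute add_left_mono dist_triangle order_trans)
  ultimately have "dist (q s1) (q s2) \<le> 2 * M1 + 1" using s1 s2 by (simp add: dist_commute)
  hence "L0 * (dist (q s1) (q s2) + C0) \<le> L0 * (2 * M1 + 1 + C0)" using L0 by (intro mult_left_mono) auto
  hence "\<bar>s1 - s2\<bar> \<le> L0 * (2 * M1 + 1 + C0)" using q_low'[of s1 s2] by linarith
  hence "\<bar>s0 - s2\<bar> \<le> L0 * (2 * M1 + 1 + C0)" using s1 s2 by auto
  hence "L0 * \<bar>s0 - s2\<bar> \<le> L0 * (L0 * (2 * M1 + 1 + C0))" using L0 by (intro mult_left_mono) auto
  hence "dist (q s0) (q s2) \<le> L0 * (L0 * (2 * M1 + 1 + C0)) + C0"
    using q_up[of s0 s2] by linarith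
  hence "dist (q s0) (\<sigma> t2) \<le> Hc" unfolding Hc_def using s2 dist_triangle[of "q s0" "\<sigma> t2" "q s2"]
    by (simp add: dist_commute)
  thus ?thesis using t2D by blast
qed

end

definition geo :: "'a::metric_space \<Rightarrow> 'a \<Rightarrow> real \<Rightarrow> 'a" where
  "geo x y = (SOME g. geodesic_seg g x y)"

lemma geo: assumes "CAT0_space TYPE('a::metric_space)" shows "geodesic_seg (geo (x::'a) y) x y"
proof -
  have "\<exists>g. geodesic_seg g x y" by (rule cat0_geo[OF assms])
  thus ?thesis unfolding geo_def by (rule someI_ex)
qed

locale bump = mseg \<sigma> a b q r L0 C0 for \<sigma> :: "real \<Rightarrow> 'a::metric_space" and a b q r L0 C0 +
  fixes x y1 :: 'a and D0 eps :: real
  assumes D0: "1 \<le> D0" and eps: "0 < eps" "eps \<le> 1/2" "eps * D0 \<le> 2"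
    and xy1: "dist x y1 \<le> eps * hh x" and gap1: "pr y1 = pr x + D0"
begin

definition "R = hh x"
definition "tx = pr x"
definition "ty = pr y1"
definition "H1 = D0 / 4"
definition "lam = H1 / R"
definition "h1 = hh y1"
definition "c1 = geo (\<sigma> tx) x"
definition "c2 = geo (\<sigma> ty) y1"
definition "xt = c1 H1"
definition "yt = c2 (lam * h1)"
definition "h2 = lam * h1"
definition "lT = dist xt yt"
definition "sl = lT - D0"

lemma txD: "tx \<in> {0..D}" unfolding tx_def using pr(1) .
lemma tyD: "ty \<in> {0..D}" unfolding ty_def using pr(1) .
lemma tyx: "ty = tx + D0" unfolding ty_def tx_def using gap1 .

lemma Rbig: "D0 \<le> eps * R"
proof -
  have "D0 \<le> \<bar>pr x - pr y1\<bar>" using gap1 by simp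
  also have "\<dots> \<le> dist x y1" by (rule pr_lip)
  also have "\<dots> \<le> eps * R" using xy1 unfolding R_def .
  finally show ?thesis .
qed

lemma Rpos: "0 < R" using Rbig D0 eps
  by (metis dual_order.strict_trans1 linorder_not_le mult_nonneg_nonpos order_less_le zero_less_one)

lemma R2: "2 * D0 \<le> R"
proof -
  have "eps * R \<le> (1/2) * R" using eps Rpos by (intro mult_right_mono) auto
  thus ?thesis using Rbig by simp
qed

lemma H1pos: "0 < H1" unfolding H1_def using D0 by simp
lemma lam: "0 < lam" "lam \<le> 1/8" "lam * R = H1"
proof -
  show "0 < lam" unfolding lam_def using H1pos Rpos by simp
  show "lam * R = H1" unfolding lam_def using Rpos by simp
  have "H1 \<le> R / 8" unfolding H1_def using R2 by simp
  thus "lam \<le> 1/8" unfolding lam_def using Rpos by (simp add: divide_le_eq)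
qed

lemma c1: "geodesic_seg c1 (\<sigma> tx) x" unfolding c1_def by (rule geo[OF cat0])
lemma c2: "geodesic_seg c2 (\<sigma> ty) y1" unfolding c2_def by (rule geo[OF cat0])
lemma dc1: "dist (\<sigma> tx) x = R" unfolding R_def hh_def tx_def by (simp add: dist_commute)
lemma dc2: "dist (\<sigma> ty) y1 = h1" unfolding h1_def hh_def ty_def by (simp add: dist_commute)

lemma h1_le: "h1 \<le> (1 + eps) * R"
proof -
  have "h1 \<le> dist y1 x + R" unfolding h1_def R_def by (rule hh_lip)
  thus ?thesis using xy1 unfolding R_def by (simp add: dist_commute algebra_simps)
qed

lemma h2_le: "h2 \<le> (3/2) * H1" and h2_nn: "0 \<le> h2"
proof -
  have "h2 \<le> lam * ((1 + eps) * R)" unfolding h2_def using h1_le lam by (intro mult_left_mono) auto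
  also have "\<dots> = (1 + eps) * H1" using lam(3) by (simp add: algebra_simps)
  also have "\<dots> \<le> (3/2) * H1" using eps H1pos by (intro mult_right_mono) auto
  finally show "h2 \<le> (3/2) * H1" .
  show "0 \<le> h2" unfolding h2_def h1_def using lam hh_nn by simp
qed

lemma xt: "pr xt = tx" "hh xt = H1"
proof -
  have H1R: "H1 \<in> {0..hh x}" using H1pos R2 D0 unfolding H1_def R_def by auto
  have c1': "geodesic_seg c1 (\<sigma> (pr x)) x" using c1 unfolding tx_def .
  show "pr xt = tx" unfolding xt_def tx_def by (rule vertical(1)[OF c1' H1R])
  show "hh xt = H1" unfolding xt_def by (rule vertical(2)[OF c1' H1R])
qed

lemma yt: "pr yt = ty" "hh yt = h2"
proof -
  have hR: "lam * h1 \<in> {0..hh y1}" using lam hh_nn unfolding h1_def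
    by (auto simp: mult_left_le_one_le)
  have c2': "geodesic_seg c2 (\<sigma> (pr y1)) y1" using c2 unfolding ty_def .
  show "pr yt = ty" unfolding yt_def ty_def by (rule vertical(1)[OF c2' hR])
  show "hh yt = h2" unfolding yt_def h2_def by (rule vertical(2)[OF c2' hR])
qed

lemma lT_lower: "D0 \<le> lT"
proof -
  have "D0 = \<bar>pr xt - pr yt\<bar>" using xt yt tyx D0 by simp
  also have "\<dots> \<le> lT" unfolding lT_def by (rule pr_lip)
  finally show ?thesis .
qed

lemma lT_upper: "lT \<le> D0 + eps * H1"
proof -
  define g3 where "g3 = geo (\<sigma> tx) y1"
  have g3: "geodesic_seg g3 (\<sigma> tx) y1" unfolding g3_def by (rule geo[OF cat0])
  define L3 where "L3 = dist (\<sigma> tx) y1"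
  define m where "m = g3 (lam * L3)"
  have l01: "0 \<le> lam" "lam \<le> 1" using lam by auto
  have "dist (c1 (lam * dist (\<sigma> tx) x)) (g3 (lam * dist (\<sigma> tx) y1)) \<le> lam * dist x y1"
    by (rule cat0_vertex[OF cat0 c1 g3 l01])
  hence 1: "dist xt m \<le> lam * dist x y1" unfolding xt_def m_def L3_def dc1 lam(3) .
  have g3r: "geodesic_seg (\<lambda>s. g3 (L3 - s)) y1 (\<sigma> tx)" unfolding L3_def by (rule geo_rev[OF g3])
  have c2r: "geodesic_seg (\<lambda>s. c2 (h1 - s)) y1 (\<sigma> ty)"
    using geo_rev[OF c2] unfolding dc2 .
  have l01': "0 \<le> 1 - lam" "1 - lam \<le> 1" using lam by auto
  have "dist ((\<lambda>s. g3 (L3 - s)) ((1 - lam) * dist y1 (\<sigma> tx))) ((\<lambda>s. c2 (h1 - s)) ((1 - lam) * dist y1 (\<sigma> ty)))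
        \<le> (1 - lam) * dist (\<sigma> tx) (\<sigma> ty)"
    by (rule cat0_vertex[OF cat0 g3r c2r l01'])
  moreover have "L3 - (1 - lam) * dist y1 (\<sigma> tx) = lam * L3" unfolding L3_def by (simp add: dist_commute algebra_simps)
  moreover have "h1 - (1 - lam) * dist y1 (\<sigma> ty) = lam * h1" using dc2 by (simp add: dist_commute algebra_simps)
  moreover have "dist (\<sigma> tx) (\<sigma> ty) = D0" using sd[OF txD tyD] tyx D0 by simp
  ultimately have 2: "dist m yt \<le> (1 - lam) * D0" unfolding m_def yt_def by simp
  have "lT \<le> dist xt m + dist m yt" unfolding lT_def by (rule dist_triangle)
  also have "\<dots> \<le> lam * dist x y1 + (1 - lam) * D0" using 1 2 by simp
  also have "lam * dist x y1 \<le> lam * (eps * R)" using xy1 lam unfolding R_def by (intro mult_left_mono) auto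
  hence "lam * dist x y1 + (1 - lam) * D0 \<le> eps * H1 + (1 - lam) * D0" using lam(3) by (simp add: algebra_simps)
  also have "\<dots> \<le> D0 + eps * H1" using lam D0 by (simp add: algebra_simps)
  finally show ?thesis .
qed

lemma sl: "0 \<le> sl" "sl \<le> 1/2"
proof -
  show "0 \<le> sl" unfolding sl_def using lT_lower by simp
  have "eps * H1 = eps * D0 / 4" unfolding H1_def by simp
  hence "eps * H1 \<le> 1/2" using eps(3) by linarith
  thus "sl \<le> 1/2" unfolding sl_def using lT_upper by simp
qed


lemma sig_low2:
  assumes "w \<in> {0..D}"
  shows "hh u + (w - pr u) \<le> 2 * dist u (\<sigma> w)" "hh u + (pr u - w) \<le> 2 * dist u (\<sigma> w)"
proof -
  have 1: "(hh u + \<bar>w - pr u\<bar>) / sqrt 2 \<le> dist u (\<sigma> w)" by (rule sigma_lower[OF assms])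
  hence 2: "hh u + \<bar>w - pr u\<bar> \<le> sqrt 2 * dist u (\<sigma> w)" by (simp add: divide_le_eq mult.commute)
  have "sqrt 2 \<le> 2" by (simp add: real_sqrt_le_iff[of 2 4, simplified])
  hence "sqrt 2 * dist u (\<sigma> w) \<le> 2 * dist u (\<sigma> w)" by (intro mult_right_mono) auto
  with 2 have 3: "hh u + \<bar>w - pr u\<bar> \<le> 2 * dist u (\<sigma> w)" by linarith
  show "hh u + (w - pr u) \<le> 2 * dist u (\<sigma> w)" using 3 by (smt (verit) abs_ge_self)
  show "hh u + (pr u - w) \<le> 2 * dist u (\<sigma> w)" using 3 by (smt (verit) abs_ge_minus_self)
qed

definition "s1 = tx"
definition "s2 = s1 + H1"
definition "s3 = s2 + lT"
definition "s4 = s3 + h2"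
definition "s5 = s4 + (D - ty)"
definition "gT = geo xt yt"

definition pQ :: "real \<Rightarrow> 'a" where
  "pQ s = (if s \<le> s1 then \<sigma> s else if s \<le> s2 then c1 (s - s1) else if s \<le> s3 then gT (s - s2)
      else if s \<le> s4 then c2 (s4 - s) else \<sigma> (ty + (s - s4)))"

lemma gT: "geodesic_seg gT xt yt" unfolding gT_def by (rule geo[OF cat0])

lemma h2h1: "h2 \<le> h1"
  unfolding h2_def h1_def using lam hh_nn by (simp add: mult_left_le_one_le)

lemma H1R: "H1 \<le> R" using R2 D0 unfolding H1_def by simp

lemma h2pos: "0 < h2"
proof -
  have "R \<le> dist x y1 + h1" unfolding R_def h1_def by (rule hh_lip)
  hence "R - eps * R \<le> h1" using xy1 unfolding R_def by simp
  moreover have "eps * R \<le> (1/2) * R" using eps Rpos by (intro mult_right_mono) auto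
  ultimately have "0 < h1" using Rpos by linarith
  thus ?thesis unfolding h2_def using lam by simp
qed

lemma spos: "0 \<le> s1" "s1 \<le> s2" "s2 \<le> s3" "s3 \<le> s4" "s4 \<le> s5" "s5 = D + H1 + lT + h2 - D0"
  using txD tyD H1pos lT_lower D0 h2_nn tyx unfolding s1_def s2_def s3_def s4_def s5_def by auto

lemma spos2: "s1 < s2" "s2 < s3" "s3 < s4"
  using H1pos lT_lower D0 h2pos unfolding s2_def s3_def s4_def by auto

lemma pA: "s \<le> s1 \<Longrightarrow> pQ s = \<sigma> s" unfolding pQ_def by simp
lemma pV1: "s1 \<le> s \<Longrightarrow> s \<le> s2 \<Longrightarrow> pQ s = c1 (s - s1)"
  unfolding pQ_def using geo_0[OF c1] unfolding s1_def by auto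
lemma pT: "s2 \<le> s \<Longrightarrow> s \<le> s3 \<Longrightarrow> pQ s = gT (s - s2)"
proof -
  assume a: "s2 \<le> s" "s \<le> s3"
  have "c1 (s2 - s1) = gT 0" using geo_0[OF gT] unfolding s2_def xt_def by simp
  thus ?thesis using a spos spos2 unfolding pQ_def by auto
qed
lemma pV2: "s3 \<le> s \<Longrightarrow> s \<le> s4 \<Longrightarrow> pQ s = c2 (s4 - s)"
proof -
  assume a: "s3 \<le> s" "s \<le> s4"
  have "gT (s3 - s2) = c2 (s4 - s3)" using geo_1[OF gT] unfolding s3_def s4_def lT_def yt_def h2_def by simp
  thus ?thesis using a spos spos2 unfolding pQ_def by auto
qed
lemma pE: "s4 \<le> s \<Longrightarrow> pQ s = \<sigma> (ty + (s - s4))"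
proof -
  assume a: "s4 \<le> s"
  have "c2 (s4 - s4) = \<sigma> (ty + (s4 - s4))" using geo_0[OF c2] by simp
  thus ?thesis using a spos spos2 unfolding pQ_def by auto
qed

lemma dA: "0 \<le> s \<Longrightarrow> s \<le> s1 \<Longrightarrow> pr (pQ s) = s \<and> hh (pQ s) = 0 \<and> pQ s = \<sigma> s \<and> s \<in> {0..D}"
  using pA pr_sigma hh_sigma txD unfolding s1_def by auto

lemma dE: "s4 \<le> s \<Longrightarrow> s \<le> s5 \<Longrightarrow> pr (pQ s) = ty + (s - s4) \<and> hh (pQ s) = 0 \<and> pQ s = \<sigma> (ty + (s - s4)) \<and> ty + (s - s4) \<in> {0..D}"
proof -
  assume a: "s4 \<le> s" "s \<le> s5"
  have w: "ty + (s - s4) \<in> {0..D}" using a tyD unfolding s5_def by auto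
  show ?thesis using pE[OF a(1)] pr_sigma[OF w] hh_sigma[OF w] w by auto
qed

lemma dV1: "s1 \<le> s \<Longrightarrow> s \<le> s2 \<Longrightarrow> pr (pQ s) = tx \<and> hh (pQ s) = s - s1"
proof -
  assume a: "s1 \<le> s" "s \<le> s2"
  have c1': "geodesic_seg c1 (\<sigma> (pr x)) x" using c1 unfolding tx_def .
  have i: "s - s1 \<in> {0..hh x}" using a H1R unfolding s2_def R_def by auto
  show ?thesis using vertical[OF c1' i] pV1[OF a] unfolding tx_def by simp
qed

lemma dV2: "s3 \<le> s \<Longrightarrow> s \<le> s4 \<Longrightarrow> pr (pQ s) = ty \<and> hh (pQ s) = s4 - s"
proof -
  assume a: "s3 \<le> s" "s \<le> s4"
  have c2': "geodesic_seg c2 (\<sigma> (pr y1)) y1" using c2 unfolding ty_def .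
  have i: "s4 - s \<in> {0..hh y1}" using a h2h1 unfolding s4_def h1_def by auto
  show ?thesis using vertical[OF c2' i] pV2[OF a] unfolding ty_def by simp
qed

lemma dT: "s2 \<le> s \<Longrightarrow> s \<le> s3 \<Longrightarrow> tx + (s - s2) - sl \<le> pr (pQ s) \<and> pr (pQ s) \<le> tx + (s - s2)
   \<and> H1 - (s - s2) \<le> hh (pQ s) \<and> h2 - (s3 - s) \<le> hh (pQ s) \<and> 0 \<le> hh (pQ s)"
proof -
  assume a: "s2 \<le> s" "s \<le> s3"
  have i: "s - s2 \<in> {0..dist xt yt}" using a unfolding s3_def lT_def by auto
  have d1: "dist xt (pQ s) = s - s2" using geo_distx[OF gT i] pT[OF a] by simp
  have d2: "dist (pQ s) yt = s3 - s" using geo_disty[OF gT i] pT[OF a] unfolding s3_def lT_def by simp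
  have "\<bar>pr xt - pr (pQ s)\<bar> \<le> s - s2" using pr_lip[of xt "pQ s"] d1 by simp
  moreover have "\<bar>pr (pQ s) - pr yt\<bar> \<le> s3 - s" using pr_lip[of "pQ s" yt] d2 by simp
  moreover have "\<bar>hh xt - hh (pQ s)\<bar> \<le> s - s2" using hh_lip'[of xt "pQ s"] d1 by simp
  moreover have "\<bar>hh (pQ s) - hh yt\<bar> \<le> s3 - s" using hh_lip'[of "pQ s" yt] d2 by simp
  moreover have "s3 - s2 = D0 + sl" unfolding s3_def sl_def by simp
  ultimately show ?thesis using xt yt tyx hh_nn[of "pQ s"] by (auto simp: abs_le_iff)
qed

lemma lip_concat:
  fixes f :: "real \<Rightarrow> 'a"
  assumes "\<And>s t. s \<in> {u..v} \<Longrightarrow> t \<in> {u..v} \<Longrightarrow> dist (f s) (f t) \<le> \<bar>s - t\<bar>"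
    "\<And>s t. s \<in> {v..w} \<Longrightarrow> t \<in> {v..w} \<Longrightarrow> dist (f s) (f t) \<le> \<bar>s - t\<bar>"
    "u \<le> v" "v \<le> w" "s \<in> {u..w}" "t \<in> {u..w}"
  shows "dist (f s) (f t) \<le> \<bar>s - t\<bar>"
proof -
  have key: "dist (f s) (f t) \<le> \<bar>s - t\<bar>" if "s \<in> {u..v}" "t \<in> {v..w}" for s t
  proof -
    have "dist (f s) (f t) \<le> dist (f s) (f v) + dist (f v) (f t)" by (rule dist_triangle)
    also have "\<dots> \<le> \<bar>s - v\<bar> + \<bar>v - t\<bar>" using assms(1)[of s v] assms(2)[of v t] that assms(3,4)
      by (intro add_mono) auto
    finally show ?thesis using that by auto
  qed
  show ?thesis
  proof (cases "s \<le> v")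
    case True
    show ?thesis
    proof (cases "t \<le> v")
      case True thus ?thesis using \<open>s \<le> v\<close> assms by auto
    next
      case False thus ?thesis using key[of s t] \<open>s \<le> v\<close> assms by auto
    qed
  next
    case False
    show ?thesis
    proof (cases "t \<le> v")
      case True thus ?thesis using key[of t s] False assms by (auto simp: dist_commute abs_minus_commute)
    next
      case f2: False thus ?thesis using False assms by auto
    qed
  qed
qed

lemma isoA: "s \<in> {0..s1} \<Longrightarrow> t \<in> {0..s1} \<Longrightarrow> dist (pQ s) (pQ t) = \<bar>s - t\<bar>"
  using dA sd by auto
lemma isoV1: "s \<in> {s1..s2} \<Longrightarrow> t \<in> {s1..s2} \<Longrightarrow> dist (pQ s) (pQ t) = \<bar>s - t\<bar>"
proof -
  assume a: "s \<in> {s1..s2}" "t \<in> {s1..s2}"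
  have "s - s1 \<in> {0..dist (\<sigma> tx) x}" "t - s1 \<in> {0..dist (\<sigma> tx) x}" using a H1R dc1 unfolding s2_def by auto
  thus ?thesis using geo_dist[OF c1] pV1 a by auto
qed
lemma isoT: "s \<in> {s2..s3} \<Longrightarrow> t \<in> {s2..s3} \<Longrightarrow> dist (pQ s) (pQ t) = \<bar>s - t\<bar>"
proof -
  assume a: "s \<in> {s2..s3}" "t \<in> {s2..s3}"
  have "s - s2 \<in> {0..dist xt yt}" "t - s2 \<in> {0..dist xt yt}" using a unfolding s3_def lT_def by auto
  thus ?thesis using geo_dist[OF gT] pT a by auto
qed
lemma isoV2: "s \<in> {s3..s4} \<Longrightarrow> t \<in> {s3..s4} \<Longrightarrow> dist (pQ s) (pQ t) = \<bar>s - t\<bar>"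
proof -
  assume a: "s \<in> {s3..s4}" "t \<in> {s3..s4}"
  have "s4 - s \<in> {0..dist (\<sigma> ty) y1}" "s4 - t \<in> {0..dist (\<sigma> ty) y1}" using a h2h1 dc2 unfolding s4_def by auto
  thus ?thesis using geo_dist[OF c2] pV2 a by (auto simp: abs_minus_commute)
qed
lemma isoE: "s \<in> {s4..s5} \<Longrightarrow> t \<in> {s4..s5} \<Longrightarrow> dist (pQ s) (pQ t) = \<bar>s - t\<bar>"
  using dE sd by auto

lemma pQ_lip: "s \<in> {0..s5} \<Longrightarrow> t \<in> {0..s5} \<Longrightarrow> dist (pQ s) (pQ t) \<le> \<bar>s - t\<bar>"
proof -
  have 2: "\<And>s t. s \<in> {0..s2} \<Longrightarrow> t \<in> {0..s2} \<Longrightarrow> dist (pQ s) (pQ t) \<le> \<bar>s - t\<bar>"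
    by (rule lip_concat[of 0 s1 pQ s2]) (use isoA isoV1 spos in auto)
  have 3: "\<And>s t. s \<in> {0..s3} \<Longrightarrow> t \<in> {0..s3} \<Longrightarrow> dist (pQ s) (pQ t) \<le> \<bar>s - t\<bar>"
    by (rule lip_concat[of 0 s2 pQ s3]) (use 2 isoT spos in auto)
  have 4: "\<And>s t. s \<in> {0..s4} \<Longrightarrow> t \<in> {0..s4} \<Longrightarrow> dist (pQ s) (pQ t) \<le> \<bar>s - t\<bar>"
    by (rule lip_concat[of 0 s3 pQ s4]) (use 3 isoV2 spos in auto)
  show "s \<in> {0..s5} \<Longrightarrow> t \<in> {0..s5} \<Longrightarrow> dist (pQ s) (pQ t) \<le> \<bar>s - t\<bar>"
    by (rule lip_concat[of 0 s4 pQ s5]) (use 4 isoE spos in auto)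
qed

lemma cnst: "D0 = 4 * H1" "lT = D0 + sl" "ty = tx + D0" "s1 = tx" "s2 = s1 + H1" "s3 = s2 + lT" "s4 = s3 + h2"
  "s5 = s4 + (D - ty)" "h2 \<le> (3/2) * H1" "0 \<le> h2" "0 \<le> sl" "sl \<le> 1/2" "0 < H1"
  using H1pos sl h2_le h2_nn tyx unfolding H1_def sl_def s1_def s2_def s3_def s4_def s5_def by auto

lemma pQ_low:
  assumes st: "s \<le> t" "s \<in> {0..s5}" "t \<in> {0..s5}"
  shows "(t - s) / 4 - 1 \<le> dist (pQ s) (pQ t)"
proof (cases "t - s \<le> 4")
  case True
  hence "(t - s) / 4 - 1 \<le> 0" by (simp add: field_simps)
  thus ?thesis using zero_le_dist[of "pQ s" "pQ t"] by linarith
next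
  case False
  let ?u = "pQ s" and ?v = "pQ t"
  have P1: "pr ?v - pr ?u \<le> dist ?u ?v" "pr ?u - pr ?v \<le> dist ?u ?v" using pr_lip[of ?u ?v] by auto
  have P2: "hh ?v - hh ?u \<le> dist ?u ?v" "hh ?u - hh ?v \<le> dist ?u ?v" using hh_lip'[of ?u ?v] by auto
  note C = cnst
  have ps: "s \<le> s1 \<or> (s1 \<le> s \<and> s \<le> s2) \<or> (s2 \<le> s \<and> s \<le> s3) \<or> (s3 \<le> s \<and> s \<le> s4) \<or> (s4 \<le> s \<and> s \<le> s5)"
    using st by auto
  have pt: "t \<le> s1 \<or> (s1 \<le> t \<and> t \<le> s2) \<or> (s2 \<le> t \<and> t \<le> s3) \<or> (s3 \<le> t \<and> t \<le> s4) \<or> (s4 \<le> t \<and> t \<le> s5)"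
    using st by auto
  have cs: "\<And>P. (s \<le> s1 \<Longrightarrow> P) \<Longrightarrow> (s1 \<le> s \<and> s \<le> s2 \<Longrightarrow> P) \<Longrightarrow> (s2 \<le> s \<and> s \<le> s3 \<Longrightarrow> P) \<Longrightarrow> (s3 \<le> s \<and> s \<le> s4 \<Longrightarrow> P) \<Longrightarrow> (s4 \<le> s \<and> s \<le> s5 \<Longrightarrow> P) \<Longrightarrow> P" using ps by blast
  have ct: "\<And>P. (t \<le> s1 \<Longrightarrow> P) \<Longrightarrow> (s1 \<le> t \<and> t \<le> s2 \<Longrightarrow> P) \<Longrightarrow> (s2 \<le> t \<and> t \<le> s3 \<Longrightarrow> P) \<Longrightarrow> (s3 \<le> t \<and> t \<le> s4 \<Longrightarrow> P) \<Longrightarrow> (s4 \<le> t \<and> t \<le> s5 \<Longrightarrow> P) \<Longrightarrow> P" using pt by blast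
  have "t - s \<le> 4 * dist ?u ?v + 4"
  proof (rule cs; rule ct)
    assume "s \<le> s1" "t \<le> s1"
    hence h: "0 \<le> s" "s \<le> s1" "0 \<le> t" "t \<le> s1" using st by auto
    show ?thesis using isoA[of s t] st spos h by auto
  next
    assume "s \<le> s1" "s1 \<le> t \<and> t \<le> s2"
    hence h: "0 \<le> s" "s \<le> s1" "s1 \<le> t" "t \<le> s2" using st by auto
    have P4: "hh ?v + (s - pr ?v) \<le> 2 * dist ?u ?v" "hh ?v + (pr ?v - s) \<le> 2 * dist ?u ?v"
      using sig_low2[of "s" ?v] dA[OF h(1) h(2)] spos st h by (auto simp: dist_commute)
    show ?thesis using dA[OF h(1) h(2)] dV1[OF h(3) h(4)] P1 P2 C st False P4 spos h by (elim conjE) linarith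
  next
    assume "s \<le> s1" "s2 \<le> t \<and> t \<le> s3"
    hence h: "0 \<le> s" "s \<le> s1" "s2 \<le> t" "t \<le> s3" using st by auto
    have P4: "hh ?v + (s - pr ?v) \<le> 2 * dist ?u ?v" "hh ?v + (pr ?v - s) \<le> 2 * dist ?u ?v"
      using sig_low2[of "s" ?v] dA[OF h(1) h(2)] spos st h by (auto simp: dist_commute)
    show ?thesis using dA[OF h(1) h(2)] dT[OF h(3) h(4)] P1 P2 C st False P4 spos h by (elim conjE) linarith
  next
    assume "s \<le> s1" "s3 \<le> t \<and> t \<le> s4"
    hence h: "0 \<le> s" "s \<le> s1" "s3 \<le> t" "t \<le> s4" using st by auto
    have P4: "hh ?v + (s - pr ?v) \<le> 2 * dist ?u ?v" "hh ?v + (pr ?v - s) \<le> 2 * dist ?u ?v"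
      using sig_low2[of "s" ?v] dA[OF h(1) h(2)] spos st h by (auto simp: dist_commute)
    show ?thesis using dA[OF h(1) h(2)] dV2[OF h(3) h(4)] P1 P2 C st False P4 spos h by (elim conjE) linarith
  next
    assume "s \<le> s1" "s4 \<le> t \<and> t \<le> s5"
    hence h: "0 \<le> s" "s \<le> s1" "s4 \<le> t" "t \<le> s5" using st by auto
    have P3: "hh ?u + ((ty + (t - s4)) - pr ?u) \<le> 2 * dist ?u ?v" "hh ?u + (pr ?u - (ty + (t - s4))) \<le> 2 * dist ?u ?v"
      using sig_low2[of "(ty + (t - s4))" ?u] dE[OF h(3) h(4)] spos st h by auto
    have P4: "hh ?v + (s - pr ?v) \<le> 2 * dist ?u ?v" "hh ?v + (pr ?v - s) \<le> 2 * dist ?u ?v"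
      using sig_low2[of "s" ?v] dA[OF h(1) h(2)] spos st h by (auto simp: dist_commute)
    show ?thesis using dA[OF h(1) h(2)] dE[OF h(3) h(4)] P1 P2 C st False P3 P4 spos h by (elim conjE) linarith
  next
    assume "s1 \<le> s \<and> s \<le> s2" "t \<le> s1"
    hence h: "s1 \<le> s" "s \<le> s2" "0 \<le> t" "t \<le> s1" using st by auto
    show ?thesis using spos st h False by linarith
  next
    assume "s1 \<le> s \<and> s \<le> s2" "s1 \<le> t \<and> t \<le> s2"
    hence h: "s1 \<le> s" "s \<le> s2" "s1 \<le> t" "t \<le> s2" using st by auto
    show ?thesis using isoV1[of s t] st spos h by auto
  next
    assume "s1 \<le> s \<and> s \<le> s2" "s2 \<le> t \<and> t \<le> s3"
    hence h: "s1 \<le> s" "s \<le> s2" "s2 \<le> t" "t \<le> s3" using st by auto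
    show ?thesis using dV1[OF h(1) h(2)] dT[OF h(3) h(4)] P1 P2 C st False spos h by (elim conjE) linarith
  next
    assume "s1 \<le> s \<and> s \<le> s2" "s3 \<le> t \<and> t \<le> s4"
    hence h: "s1 \<le> s" "s \<le> s2" "s3 \<le> t" "t \<le> s4" using st by auto
    show ?thesis using dV1[OF h(1) h(2)] dV2[OF h(3) h(4)] P1 P2 C st False spos h by (elim conjE) linarith
  next
    assume "s1 \<le> s \<and> s \<le> s2" "s4 \<le> t \<and> t \<le> s5"
    hence h: "s1 \<le> s" "s \<le> s2" "s4 \<le> t" "t \<le> s5" using st by auto
    have P3: "hh ?u + ((ty + (t - s4)) - pr ?u) \<le> 2 * dist ?u ?v" "hh ?u + (pr ?u - (ty + (t - s4))) \<le> 2 * dist ?u ?v"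
      using sig_low2[of "(ty + (t - s4))" ?u] dE[OF h(3) h(4)] spos st h by auto
    show ?thesis using dV1[OF h(1) h(2)] dE[OF h(3) h(4)] P1 P2 C st False P3 spos h by (elim conjE) linarith
  next
    assume "s2 \<le> s \<and> s \<le> s3" "t \<le> s1"
    hence h: "s2 \<le> s" "s \<le> s3" "0 \<le> t" "t \<le> s1" using st by auto
    show ?thesis using spos st h False by linarith
  next
    assume "s2 \<le> s \<and> s \<le> s3" "s1 \<le> t \<and> t \<le> s2"
    hence h: "s2 \<le> s" "s \<le> s3" "s1 \<le> t" "t \<le> s2" using st by auto
    show ?thesis using spos st h False by linarith
  next
    assume "s2 \<le> s \<and> s \<le> s3" "s2 \<le> t \<and> t \<le> s3"
    hence h: "s2 \<le> s" "s \<le> s3" "s2 \<le> t" "t \<le> s3" using st by auto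
    show ?thesis using isoT[of s t] st spos h by auto
  next
    assume "s2 \<le> s \<and> s \<le> s3" "s3 \<le> t \<and> t \<le> s4"
    hence h: "s2 \<le> s" "s \<le> s3" "s3 \<le> t" "t \<le> s4" using st by auto
    show ?thesis using dT[OF h(1) h(2)] dV2[OF h(3) h(4)] P1 P2 C st False spos h by (elim conjE) linarith
  next
    assume "s2 \<le> s \<and> s \<le> s3" "s4 \<le> t \<and> t \<le> s5"
    hence h: "s2 \<le> s" "s \<le> s3" "s4 \<le> t" "t \<le> s5" using st by auto
    have P3: "hh ?u + ((ty + (t - s4)) - pr ?u) \<le> 2 * dist ?u ?v" "hh ?u + (pr ?u - (ty + (t - s4))) \<le> 2 * dist ?u ?v"
      using sig_low2[of "(ty + (t - s4))" ?u] dE[OF h(3) h(4)] spos st h by auto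
    show ?thesis using dT[OF h(1) h(2)] dE[OF h(3) h(4)] P1 P2 C st False P3 spos h by (elim conjE) linarith
  next
    assume "s3 \<le> s \<and> s \<le> s4" "t \<le> s1"
    hence h: "s3 \<le> s" "s \<le> s4" "0 \<le> t" "t \<le> s1" using st by auto
    show ?thesis using spos st h False by linarith
  next
    assume "s3 \<le> s \<and> s \<le> s4" "s1 \<le> t \<and> t \<le> s2"
    hence h: "s3 \<le> s" "s \<le> s4" "s1 \<le> t" "t \<le> s2" using st by auto
    show ?thesis using spos st h False by linarith
  next
    assume "s3 \<le> s \<and> s \<le> s4" "s2 \<le> t \<and> t \<le> s3"
    hence h: "s3 \<le> s" "s \<le> s4" "s2 \<le> t" "t \<le> s3" using st by auto
    show ?thesis using spos st h False by linarith
  next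
    assume "s3 \<le> s \<and> s \<le> s4" "s3 \<le> t \<and> t \<le> s4"
    hence h: "s3 \<le> s" "s \<le> s4" "s3 \<le> t" "t \<le> s4" using st by auto
    show ?thesis using isoV2[of s t] st spos h by auto
  next
    assume "s3 \<le> s \<and> s \<le> s4" "s4 \<le> t \<and> t \<le> s5"
    hence h: "s3 \<le> s" "s \<le> s4" "s4 \<le> t" "t \<le> s5" using st by auto
    have P3: "hh ?u + ((ty + (t - s4)) - pr ?u) \<le> 2 * dist ?u ?v" "hh ?u + (pr ?u - (ty + (t - s4))) \<le> 2 * dist ?u ?v"
      using sig_low2[of "(ty + (t - s4))" ?u] dE[OF h(3) h(4)] spos st h by auto
    show ?thesis using dV2[OF h(1) h(2)] dE[OF h(3) h(4)] P1 P2 C st False P3 spos h by (elim conjE) linarith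
  next
    assume "s4 \<le> s \<and> s \<le> s5" "t \<le> s1"
    hence h: "s4 \<le> s" "s \<le> s5" "0 \<le> t" "t \<le> s1" using st by auto
    show ?thesis using spos st h False by linarith
  next
    assume "s4 \<le> s \<and> s \<le> s5" "s1 \<le> t \<and> t \<le> s2"
    hence h: "s4 \<le> s" "s \<le> s5" "s1 \<le> t" "t \<le> s2" using st by auto
    show ?thesis using spos st h False by linarith
  next
    assume "s4 \<le> s \<and> s \<le> s5" "s2 \<le> t \<and> t \<le> s3"
    hence h: "s4 \<le> s" "s \<le> s5" "s2 \<le> t" "t \<le> s3" using st by auto
    show ?thesis using spos st h False by linarith
  next
    assume "s4 \<le> s \<and> s \<le> s5" "s3 \<le> t \<and> t \<le> s4"
    hence h: "s4 \<le> s" "s \<le> s5" "s3 \<le> t" "t \<le> s4" using st by auto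
    show ?thesis using spos st h False by linarith
  next
    assume "s4 \<le> s \<and> s \<le> s5" "s4 \<le> t \<and> t \<le> s5"
    hence h: "s4 \<le> s" "s \<le> s5" "s4 \<le> t" "t \<le> s5" using st by auto
    show ?thesis using isoE[of s t] st spos h by auto
  qed
  thus ?thesis by (simp add: field_simps)
qed


lemma pQ_qg: "quasi_geodesic 4 1 {0..s5} pQ"
  unfolding quasi_geodesic_def
proof (intro conjI ballI)
  show "connected {0..s5}" by simp
  fix s t assume st: "s \<in> {0..s5}" "t \<in> {0..s5}"
  show "\<bar>s - t\<bar> / 4 - 1 \<le> dist (pQ s) (pQ t)"
  proof (cases "s \<le> t")
    case True thus ?thesis using pQ_low[OF True st] by (simp add: abs_minus_commute)
  next
    case False thus ?thesis using pQ_low[of t s] st by (simp add: dist_commute)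
  qed
  have "dist (pQ s) (pQ t) \<le> \<bar>s - t\<bar>" by (rule pQ_lip[OF st])
  thus "dist (pQ s) (pQ t) \<le> 4 * \<bar>s - t\<bar> + 1" by (smt (verit) abs_ge_zero)
qed simp_all

lemma pQ_0: "pQ 0 = q r" using dA[of 0] spos s0q by simp
lemma pQ_5: "pQ s5 = q (-r)"
proof -
  have "pQ s5 = \<sigma> (ty + (s5 - s4))" using dE[of s5] spos by simp
  also have "ty + (s5 - s4) = D" unfolding s5_def by simp
  finally show ?thesis using sDq by simp
qed

lemma bump_morse: "\<exists>s. dist xt (q s) \<le> MM q 4 1"
proof -
  have "pQ s2 = xt" using pV1[of s2] spos unfolding xt_def s2_def by simp
  moreover have "s2 \<in> {0..s5}" using spos by auto
  ultimately show ?thesis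
    using morse_M[OF morse _ _ _ pQ_qg, of s2] pQ_0 pQ_5 spos by auto
qed

end

lemma (in mseg) contract:
  assumes D0: "1 \<le> D0" and eps: "0 < eps" "eps \<le> 1/2" "eps * D0 \<le> 2"
    and xy: "dist x y \<le> eps * hh x" and gap: "pr x + D0 \<le> pr y"
  shows "\<exists>z s. pr z = pr x \<and> hh z = D0/4 \<and> dist z (q s) \<le> MM q 4 1"
proof -
  define g where "g = geo x y"
  have g: "geodesic_seg g x y" unfolding g_def by (rule geo[OF cat0])
  have cont: "continuous_on {0..dist x y} (\<lambda>s. pr (g s))"
    by (rule continuous_on_compose2[OF pr_cont geo_cont[OF g]]) auto
  have "pr (g 0) \<le> pr x + D0" using geo_0[OF g] D0 by simp
  moreover have "pr x + D0 \<le> pr (g (dist x y))" using geo_1[OF g] gap by simp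
  ultimately obtain s1 where s1: "0 \<le> s1" "s1 \<le> dist x y" "pr (g s1) = pr x + D0"
    using IVT'[of "\<lambda>s. pr (g s)" 0 "pr x + D0" "dist x y", OF _ _ _ cont] by auto
  define y1 where "y1 = g s1"
  have "dist x y1 = s1" unfolding y1_def using geo_distx[OF g] s1 by simp
  hence xy1: "dist x y1 \<le> eps * hh x" using s1 xy by simp
  interpret B: bump \<sigma> a b q r L0 C0 x y1 D0 eps
    by unfold_locales (use D0 eps xy1 s1 y1_def in auto)
  show ?thesis using B.bump_morse B.xt unfolding B.tx_def B.H1_def by blast
qed

lemma path_length_ge:
  fixes P :: "real \<Rightarrow> 'a::metric_space" and u :: "nat \<Rightarrow> real"
  assumes u0: "0 \<le> u 0" and u1: "u N \<le> 1" and mono: "\<And>k. k < N \<Longrightarrow> u k \<le> u (Suc k)"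
  shows "ereal (\<Sum>k<N. dist (P (u k)) (P (u (Suc k)))) \<le> path_length P"
proof -
  define T where "T i = (if i = 0 then 0 else if i \<le> Suc N then u (i - 1) else 1)" for i
  have T0: "T 0 = 0" and Tn: "T (Suc (Suc N)) = 1" unfolding T_def by auto
  have Tm: "\<forall>i<Suc (Suc N). T i \<le> T (Suc i)"
  proof (intro allI impI)
    fix i assume i: "i < Suc (Suc N)"
    show "T i \<le> T (Suc i)"
    proof (cases i)
      case 0 thus ?thesis unfolding T_def using u0 by simp
    next
      case (Suc k)
      show ?thesis
      proof (cases "k < N")
        case True thus ?thesis unfolding T_def using Suc mono by auto
      next
        case False
        then have "k = N" using i Suc by auto
        thus ?thesis unfolding T_def using Suc u1 by auto
      qed
    qed
  qed
  let ?F = "\<lambda>i. dist (P (T i)) (P (T (Suc i)))"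
  have "(\<Sum>i<Suc (Suc N). ?F i) = ?F 0 + (\<Sum>i<Suc N. ?F (Suc i))" by (rule sum.lessThan_Suc_shift)
  also have "(\<Sum>i<Suc N. ?F (Suc i)) = (\<Sum>i<N. ?F (Suc i)) + ?F (Suc N)" by simp
  also have "(\<Sum>i<N. ?F (Suc i)) = (\<Sum>k<N. dist (P (u k)) (P (u (Suc k))))"
    by (rule sum.cong) (auto simp: T_def)
  finally have "(\<Sum>k<N. dist (P (u k)) (P (u (Suc k)))) \<le> (\<Sum>i<Suc (Suc N). ?F i)" by simp
  moreover have "ereal (\<Sum>i<Suc (Suc N). ?F i) \<le> path_length P"
    unfolding path_length_def
    by (rule SUP_upper2[of "(Suc (Suc N), T)"]) (use T0 Tn Tm in auto)
  ultimately show ?thesis by (meson ereal_less_eq(3) order_trans)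
qed

context mseg begin

lemma count:
  fixes P :: "real \<Rightarrow> 'a" and rho w D0 eps :: real and N :: nat
  assumes Pc: "continuous_on {0..1} P" and P0: "P 0 = a" and P1: "P 1 = b"
    and avoid: "P ` {0..1} \<inter> ball (q 0) rho = {}"
    and D0: "1 \<le> D0" and eps: "0 < eps" "eps \<le> 1/2" "eps * D0 \<le> 2"
    and D0big: "MM q 4 1 + Hc < D0 / 4"
    and far: "MM q 4 1 + D0/4 + w + Hc < r / L0 - C0"
    and win: "w \<le> rho - Hc" and w0: "0 \<le> w"
    and N: "real N * D0 \<le> 2 * w"
  shows "ereal (real N * (eps * (rho - Hc - w))) \<le> path_length P"
proof -
  let ?o = "q 0" and ?Mq = "MM q 4 1"
  have far_o: "rho \<le> dist ?o (P t)" if "t \<in> {0..1}" for t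
  proof -
    have "P t \<notin> ball ?o rho" using avoid that by blast
    thus ?thesis by (simp add: not_less)
  qed
  obtain m where m: "m \<in> {0..D}" "dist ?o (\<sigma> m) \<le> Hc" using q_near_sig[of 0] r0 by auto
  have ma: "rho - Hc \<le> m"
  proof -
    have "rho \<le> dist ?o a" using far_o[of 0] P0 by simp
    also have "\<dots> \<le> dist ?o (\<sigma> m) + dist (\<sigma> m) a" by (rule dist_triangle)
    also have "dist (\<sigma> m) a = m" using sd[of m 0] m geo_0[OF sg] by simp
    finally show ?thesis using m by simp
  qed
  have mb: "rho - Hc \<le> D - m"
  proof -
    have "rho \<le> dist ?o b" using far_o[of 1] P1 by simp
    also have "\<dots> \<le> dist ?o (\<sigma> m) + dist (\<sigma> m) b" by (rule dist_triangle)
    also have "dist (\<sigma> m) b = D - m" using sd[of m D] m geo_1[OF sg] by simp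
    finally show ?thesis using m by simp
  qed
  define f where "f t = pr (P t)" for t
  have fc: "continuous_on {0..1} f" unfolding f_def
    by (rule continuous_on_compose2[OF pr_cont Pc]) auto
  have f0: "f 0 = 0" unfolding f_def using P0 pr_a by simp
  have f1: "f 1 = D" unfolding f_def using P1 pr_b by simp
  define v where "v k = m - w + real k * D0" for k :: nat
  have vrange: "v k \<in> {m - w..m + w}" if "k \<le> N" for k
  proof -
    have kk: "real k * D0 \<le> real N * D0" using that D0 by (intro mult_right_mono) auto
    have "0 \<le> real k * D0" using D0 by simp
    thus ?thesis unfolding v_def using N w0 kk by auto
  qed
  define S where "S k = {t \<in> {0..1}. v k \<le> f t}" for k
  define tk where "tk k = Inf (S k)" for k
  have Sprop: "S k \<noteq> {}" "bdd_below (S k)" if "k \<le> N" for k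
  proof -
    have "1 \<in> S k" unfolding S_def using vrange[OF that] f1 win mb by auto
    thus "S k \<noteq> {}" by auto
    show "bdd_below (S k)" unfolding S_def by (rule bdd_belowI[of _ 0]) auto
  qed
  have tk: "tk k \<in> {0..1} \<and> f (tk k) = v k" if "k \<le> N" for k
  proof -
    have cl: "closed (S k)"
    proof -
      have "S k = {0..1} \<inter> f -` {v k..}" unfolding S_def by auto
      thus ?thesis using continuous_closed_preimage[OF fc] by simp
    qed
    have inS: "tk k \<in> S k" unfolding tk_def by (rule closed_contains_Inf[OF Sprop[OF that] cl])
    hence 1: "tk k \<in> {0..1}" "v k \<le> f (tk k)" unfolding S_def by auto
    have "f 0 \<le> v k" using f0 vrange[OF that] win ma w0 by auto
    then obtain t' where t': "0 \<le> t'" "t' \<le> tk k" "f t' = v k"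
      using IVT'[of f 0 "v k" "tk k"] 1 continuous_on_subset[OF fc, of "{0..tk k}"] by auto
    have "t' \<in> S k" unfolding S_def using t' 1 by auto
    hence "tk k \<le> t'" unfolding tk_def by (rule cInf_lower[OF _ Sprop(2)[OF that]])
    hence "t' = tk k" using t' by simp
    thus ?thesis using 1 t' by simp
  qed
  have tk_mono: "tk k \<le> tk (Suc k)" if "Suc k \<le> N" for k
  proof -
    have "v k \<le> v (Suc k)" unfolding v_def using D0 by (simp add: algebra_simps)
    hence "S (Suc k) \<subseteq> S k" unfolding S_def by auto
    thus ?thesis unfolding tk_def using Sprop that by (intro cInf_superset_mono) auto
  qed
  have step: "eps * (rho - Hc - w) < dist (P (tk k)) (P (tk (Suc k)))" if k: "k < N" for k
  proof -
    let ?x = "P (tk k)" and ?y = "P (tk (Suc k))"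
    have tx: "tk k \<in> {0..1}" "pr ?x = v k" using tk[of k] k unfolding f_def by auto
    have ty: "tk (Suc k) \<in> {0..1}" "pr ?y = v (Suc k)" using tk[of "Suc k"] k unfolding f_def by auto
    have gap: "pr ?x + D0 \<le> pr ?y" using tx ty unfolding v_def by (simp add: algebra_simps)
    have vw: "\<bar>pr ?x - m\<bar> \<le> w" using vrange[of k] k tx by auto
    have hx: "rho - Hc - w \<le> hh ?x"
    proof -
      have "rho \<le> dist ?o ?x" using far_o[OF tx(1)] .
      also have "\<dots> \<le> dist ?o (\<sigma> m) + dist (\<sigma> m) (\<sigma> (pr ?x)) + dist (\<sigma> (pr ?x)) ?x"
        by (metis add_mono_thms_linordered_semiring(3) dist_triangle order_trans)
      also have "dist (\<sigma> m) (\<sigma> (pr ?x)) = \<bar>m - pr ?x\<bar>" using sd m pr(1) by blast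
      finally show ?thesis using m vw unfolding hh_def by (simp add: dist_commute abs_minus_commute)
    qed
    have "\<not> dist ?x ?y \<le> eps * hh ?x"
    proof
      assume "dist ?x ?y \<le> eps * hh ?x"
      from contract[OF D0 eps this gap] obtain z s where
        z: "pr z = pr ?x" "hh z = D0/4" "dist z (q s) \<le> ?Mq" by blast
      show False
      proof (cases "s \<in> {-r..r}")
        case True
        obtain t' where t': "t' \<in> {0..D}" "dist (q s) (\<sigma> t') \<le> Hc" using q_near_sig[OF True] by blast
        have "hh z \<le> dist z (\<sigma> t')" by (rule hh_le[OF t'(1)])
        also have "\<dots> \<le> dist z (q s) + dist (q s) (\<sigma> t')" by (rule dist_triangle)
        finally show False using z t' D0big by simp
      next
        case False
        hence sr: "r < \<bar>s\<bar>" by auto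
        have "\<bar>s\<bar> / L0 - C0 \<le> dist (q s) ?o" using q_low[of s 0] by simp
        moreover have "r / L0 \<le> \<bar>s\<bar> / L0" using sr L0 by (simp add: divide_right_mono)
        moreover have "dist (q s) ?o \<le> dist (q s) z + dist z (\<sigma> (pr z)) + dist (\<sigma> (pr z)) (\<sigma> m) + dist (\<sigma> m) ?o"
          by (metis add_mono_thms_linordered_semiring(3) dist_triangle order_trans)
        moreover have "dist z (\<sigma> (pr z)) = D0/4" using z unfolding hh_def by simp
        moreover have "dist (\<sigma> (pr z)) (\<sigma> m) = \<bar>pr z - m\<bar>" using sd m pr(1) by blast
        ultimately have "r / L0 - C0 \<le> ?Mq + D0/4 + w + Hc"
          using z vw m by (simp add: dist_commute)
        thus False using far by simp
      qed
    qed
    hence "eps * hh ?x < dist ?x ?y" by simp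
    moreover have "eps * (rho - Hc - w) \<le> eps * hh ?x" using hx eps by (intro mult_left_mono) auto
    ultimately show ?thesis by simp
  qed
  have "real N * (eps * (rho - Hc - w)) \<le> (\<Sum>k<N. dist (P (tk k)) (P (tk (Suc k))))"
  proof -
    have "(\<Sum>k<N. eps * (rho - Hc - w)) \<le> (\<Sum>k<N. dist (P (tk k)) (P (tk (Suc k))))"
      by (rule sum_mono) (use step in force)
    thus ?thesis by simp
  qed
  moreover have "ereal (\<Sum>k<N. dist (P (tk k)) (P (tk (Suc k)))) \<le> path_length P"
    by (rule path_length_ge) (use tk tk_mono in auto)
  ultimately show ?thesis by (meson ereal_less_eq(3) order_trans)
qed

end

lemma arith_final:
  fixes eps D0 L0 rho r delta Hc w :: real and N :: nat
  assumes eps: "0 < eps" and D0: "0 < D0" and L0: "1 \<le> L0" and dl: "0 < delta" and r: "0 \<le> r"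
    and rho: "delta * r / (2 * L0) \<le> rho" and wdef: "w = rho / (4 * L0^2)"
    and N: "w / D0 \<le> real N" and rh: "rho / 2 \<le> rho - Hc - w"
  shows "eps * delta^2 / (32 * L0^4 * D0) * r^2 \<le> real N * (eps * (rho - Hc - w))"
proof -
  have L0p: "0 < L0" using L0 by simp
  have r0: "0 \<le> delta * r / (2 * L0)" using dl r L0p by simp
  hence rho0: "0 \<le> rho" using rho by simp
  have w0: "0 \<le> w" unfolding wdef using rho0 by simp
  have "(w / D0) * (eps * (rho / 2)) \<le> real N * (eps * (rho - Hc - w))"
    by (rule mult_mono[OF N]) (use eps rh rho0 in auto)
  moreover have "(w / D0) * (eps * (rho / 2)) = eps * rho^2 / (8 * L0^2 * D0)"
    unfolding wdef using L0p D0 by (simp add: field_simps power2_eq_square)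
  moreover have "(delta * r / (2 * L0))^2 \<le> rho^2" by (rule power_mono[OF rho r0])
  hence "eps * (delta * r / (2 * L0))^2 / (8 * L0^2 * D0) \<le> eps * rho^2 / (8 * L0^2 * D0)"
    using eps D0 by (intro divide_right_mono mult_left_mono) auto
  moreover have "eps * (delta * r / (2 * L0))^2 / (8 * L0^2 * D0) = eps * delta^2 / (32 * L0^4 * D0) * r^2"
    using L0p D0 by (simp add: field_simps power2_eq_square power4_eq_xxxx)
  ultimately show ?thesis by linarith
qed

lemma lin_aux: "(c::real) \<le> X \<Longrightarrow> 2 * X - c \<le> rho \<Longrightarrow> X \<le> rho" by linarith

lemma lin2: "(2::real) * (m1 + d1 + 2*c1 + h1 + 1) \<le> x1 \<Longrightarrow> 4 * w1 \<le> x1 + c1 \<Longrightarrow> mq1 \<le> m1 \<Longrightarrow> hc1 \<le> h1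
  \<Longrightarrow> 0 \<le> c1 \<Longrightarrow> 0 \<le> d1 \<Longrightarrow> 0 \<le> m1 \<Longrightarrow> 0 \<le> h1 \<Longrightarrow> 4 * mq1 + d1 + 4 * w1 + 4 * hc1 < 4 * x1 - 4 * c1" by (smt (verit))

lemma main_bound:
  fixes q :: "real \<Rightarrow> 'a::metric_space" and \<gamma> \<delta> L0 C0 :: real
  assumes cat: "CAT0_space TYPE('a)" and mq: "morse_quasi_geodesic q"
    and qg: "quasi_geodesic L0 C0 UNIV q"
    and dl: "0 < \<delta>" "\<delta> < 1" and gm: "0 \<le> \<gamma>"
  defines "M1' \<equiv> MM q 1 0"
  defines "Hc' \<equiv> L0 * (L0 * (2 * M1' + 1 + C0)) + C0 + M1'"
  defines "Mq \<equiv> MM q 4 1"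
  defines "D0 \<equiv> 4 * (\<bar>Mq\<bar> + \<bar>Hc'\<bar> + 1)"
  defines "eps \<equiv> 1 / (2 * D0)"
  defines "r0 \<equiv> 2 * L0 * (C0 + \<gamma> / \<delta>) + 8 * L0^3 * D0 / \<delta> + 8 * L0 * \<bar>Hc'\<bar> / \<delta>
                 + 2 * L0 * (\<bar>Mq\<bar> + D0 + 2 * C0 + \<bar>Hc'\<bar> + 1)"
  defines "alpha \<equiv> eps * \<delta>^2 / (32 * L0^4 * D0)"
  assumes r: "r0 \<le> r"
  shows "ereal (alpha * r^2) \<le> Div q \<gamma> \<delta> r"
proof -
  have L0: "1 \<le> L0" and C0: "0 \<le> C0" using qg unfolding quasi_geodesic_def by auto
  have L0p: "0 < L0" using L0 by simp
  have D0: "4 \<le> D0" unfolding D0_def by simp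
  have A: "0 \<le> 2 * L0 * (C0 + \<gamma> / \<delta>)" using L0 C0 dl gm by simp
  have B: "0 \<le> 8 * L0^3 * D0 / \<delta>" using L0 D0 dl by simp
  have Cc: "0 \<le> 8 * L0 * \<bar>Hc'\<bar> / \<delta>" using L0 dl by simp
  have E: "0 \<le> 2 * L0 * (\<bar>Mq\<bar> + D0 + 2 * C0 + \<bar>Hc'\<bar> + 1)" using L0 D0 C0 by simp
  have rA: "2 * L0 * (C0 + \<gamma> / \<delta>) \<le> r" and rB: "8 * L0^3 * D0 / \<delta> \<le> r"
    and rC: "8 * L0 * \<bar>Hc'\<bar> / \<delta> \<le> r" and rE: "2 * L0 * (\<bar>Mq\<bar> + D0 + 2 * C0 + \<bar>Hc'\<bar> + 1) \<le> r"
    using r A B Cc E unfolding r0_def by linarith+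
  have rnn: "0 \<le> r" using rA A by linarith
  define a where "a = q r"
  define b where "b = q (-r)"
  define \<sigma> where "\<sigma> = geo a b"
  interpret mseg \<sigma> a b q r L0 C0
    by unfold_locales (use cat mq qg rnn geo[OF cat] in \<open>auto simp: \<sigma>_def a_def b_def\<close>)
  have Hc: "Hc = Hc'" unfolding Hc_def Hc'_def M1_def M1'_def ..
  let ?o = "q 0"
  define rr where "rr = min (dist ?o a) (dist ?o b)"
  define rho where "rho = \<delta> * rr - \<gamma>"
  have da: "r / L0 - C0 \<le> dist ?o a" using q_low[of 0 r] rnn unfolding a_def by simp
  have db: "r / L0 - C0 \<le> dist ?o b" using q_low[of 0 "-r"] rnn unfolding b_def by simp
  have rr_low: "r / L0 - C0 \<le> rr" unfolding rr_def using da db by simp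
  have rr_up: "rr \<le> L0 * r + C0" unfolding rr_def using q_up[of 0 r] rnn unfolding a_def by simp
  have rr0: "0 \<le> rr" unfolding rr_def by simp
  have rho_low: "\<delta> * (r / L0 - C0) - \<gamma> \<le> rho" unfolding rho_def using rr_low dl
    by (simp add: mult_left_mono)
  have rho_up: "rho \<le> L0 * r + C0"
  proof -
    have "\<delta> * rr \<le> rr" using dl rr0 by (simp add: mult_left_le_one_le)
    thus ?thesis unfolding rho_def using rr_up gm by linarith
  qed
  have rho1: "\<delta> * r / (2 * L0) \<le> rho"
  proof -
    have "\<delta> * C0 + \<gamma> = (2 * L0 * (C0 + \<gamma> / \<delta>)) * (\<delta> / (2 * L0))"
      using dl L0p by (simp add: field_simps)
    also have "\<dots> \<le> r * (\<delta> / (2 * L0))" by (rule mult_right_mono[OF rA]) (use dl L0p in simp)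
    also have "\<dots> = \<delta> * r / (2 * L0)" by simp
    finally have k: "\<delta> * C0 + \<gamma> \<le> \<delta> * r / (2 * L0)" .
    have e: "\<delta> * (r / L0 - C0) - \<gamma> = 2 * (\<delta> * r / (2 * L0)) - (\<delta> * C0 + \<gamma>)"
      using L0p by (simp add: field_simps)
    show ?thesis by (rule lin_aux[OF k]) (use e rho_low in simp)
  qed
  have "0 \<le> \<delta> * r / (2 * L0)" using dl rnn L0p by simp
  hence rho0: "0 \<le> rho" using rho1 by linarith
  define w where "w = rho / (4 * L0^2)"
  have w0: "0 \<le> w" unfolding w_def using rho0 by simp
  have w_le: "w \<le> rho / 4"
  proof -
    have "1 \<le> L0^2" using L0 by simp
    hence "4 \<le> 4 * L0^2" by simp
    thus ?thesis unfolding w_def using rho0 by (intro divide_left_mono) auto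
  qed
  have wD0: "D0 \<le> w"
  proof -
    have "(\<delta> / (2 * L0)) * (8 * L0^3 * D0 / \<delta>) \<le> (\<delta> / (2 * L0)) * r"
      using rB dl L0p by (intro mult_left_mono) auto
    moreover have "(\<delta> / (2 * L0)) * (8 * L0^3 * D0 / \<delta>) = 4 * L0^2 * D0"
      unfolding power2_eq_square power3_eq_cube using dl L0p by simp
    ultimately have "4 * L0^2 * D0 \<le> rho" using rho1 by simp
    thus ?thesis unfolding w_def using L0p by (simp add: field_simps)
  qed
  have Hrho: "\<bar>Hc'\<bar> \<le> rho / 4"
  proof -
    have "(\<delta> / (2 * L0)) * (8 * L0 * \<bar>Hc'\<bar> / \<delta>) \<le> (\<delta> / (2 * L0)) * r"
      using rC dl L0p by (intro mult_left_mono) auto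
    moreover have "(\<delta> / (2 * L0)) * (8 * L0 * \<bar>Hc'\<bar> / \<delta>) = 4 * \<bar>Hc'\<bar>"
      using dl L0p by (simp add: field_simps)
    ultimately have "4 * \<bar>Hc'\<bar> \<le> rho" using rho1 by simp
    thus ?thesis by simp
  qed
  have win: "w \<le> rho - Hc" using w_le Hrho Hc rho0 by linarith
  have rh: "rho / 2 \<le> rho - Hc - w" using w_le Hrho Hc by linarith
  have far: "Mq + D0/4 + w + Hc < r / L0 - C0"
  proof -
    have "w \<le> (L0 * r + C0) / (4 * L0^2)" unfolding w_def using rho_up L0p by (simp add: divide_right_mono)
    also have "\<dots> = (r / L0) / 4 + C0 / (4 * L0^2)" using L0p by (simp add: field_simps power2_eq_square)
    also have "C0 / (4 * L0^2) \<le> C0 / 4"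
    proof -
      have "4 \<le> 4 * L0^2" using L0 by simp
      thus ?thesis using C0 by (intro divide_left_mono) auto
    qed
    finally have "w \<le> (r / L0) / 4 + C0 / 4" by simp
    hence w1: "4 * w \<le> r / L0 + C0" by simp
    have "(1 / L0) * (2 * L0 * (\<bar>Mq\<bar> + D0 + 2 * C0 + \<bar>Hc'\<bar> + 1)) \<le> (1 / L0) * r"
      using rE L0p by (intro mult_left_mono) auto
    hence "2 * (\<bar>Mq\<bar> + D0 + 2 * C0 + \<bar>Hc'\<bar> + 1) \<le> r / L0" using L0p by simp
    from lin2[OF this w1 abs_ge_self[of Mq] abs_ge_self[of Hc'] C0 _ abs_ge_zero abs_ge_zero] D0
    have "4 * Mq + D0 + 4 * w + 4 * Hc' < 4 * (r / L0) - 4 * C0" by simp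
    thus ?thesis using Hc by simp
  qed
  have D0big: "Mq + Hc < D0 / 4" unfolding D0_def using Hc abs_ge_self[of Mq] abs_ge_self[of Hc'] by simp
  have eps: "0 < eps" "eps \<le> 1/2" "eps * D0 \<le> 2" unfolding eps_def using D0 by auto
  define N where "N = nat \<lfloor>2 * w / D0\<rfloor>"
  have y0: "0 \<le> 2 * w / D0" using w0 D0 by simp
  have Nf: "real N = of_int \<lfloor>2 * w / D0\<rfloor>" unfolding N_def using y0 by simp
  have N1: "real N * D0 \<le> 2 * w"
  proof -
    have "real N \<le> 2 * w / D0" unfolding Nf by (rule of_int_floor_le)
    thus ?thesis using D0 by (simp add: le_divide_eq)
  qed
  have N2: "w / D0 \<le> real N"
  proof -
    have "2 * w / D0 - 1 < real N" unfolding Nf by (rule real_of_int_floor_gt_diff_one)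
    moreover have "1 \<le> w / D0" using wD0 D0 by simp
    moreover have "2 * w / D0 = 2 * (w / D0)" by simp
    ultimately show ?thesis by linarith
  qed
  show ?thesis
    unfolding Div_def divg_def Let_def
  proof (rule Inf_greatest, safe)
    fix P :: "real \<Rightarrow> 'a"
    assume Pc: "continuous_on {0..1} P" and P0: "P 0 = q r" and P1: "P 1 = q (-r)"
      and av: "P ` {0..1} \<inter> ball (q 0) (\<delta> * min (dist (q 0) (q r)) (dist (q 0) (q (- r))) - \<gamma>) = {}"
    have av': "P ` {0..1} \<inter> ball (q 0) rho = {}" using av unfolding rho_def rr_def a_def b_def .
    have P0': "P 0 = a" using P0 unfolding a_def .
    have P1': "P 1 = b" using P1 unfolding b_def .
    have D01: "1 \<le> D0" using D0 by simp
    have D0big': "MM q 4 1 + Hc < D0 / 4" using D0big unfolding Mq_def .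
    have far': "MM q 4 1 + D0 / 4 + w + Hc < r / L0 - C0" using far unfolding Mq_def .
    have "ereal (real N * (eps * (rho - Hc - w))) \<le> path_length P"
      by (rule count[OF Pc P0' P1' av' D01 eps D0big' far' win w0 N1])
    moreover have "alpha * r^2 \<le> real N * (eps * (rho - Hc - w))"
      unfolding alpha_def
      by (rule arith_final[OF eps(1) _ L0 dl(1) rnn rho1 w_def N2 rh]) (use D0 in linarith)
    ultimately show "ereal (alpha * r^2) \<le> path_length P" by (meson ereal_less_eq(3) order_trans)
  qed
qed

lemma main_bound2:
  fixes q :: "real \<Rightarrow> 'a::metric_space" and \<gamma> \<delta> :: real
  assumes cat: "CAT0_space TYPE('a)" and mq: "morse_quasi_geodesic q"
    and dl: "0 < \<delta>" "\<delta> < 1" and gm: "0 \<le> \<gamma>"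
  shows "\<exists>alpha r0. 0 < alpha \<and> (\<forall>r\<ge>r0. ereal (alpha * r^2) \<le> Div q \<gamma> \<delta> r)"
proof -
  obtain L0 C0 where qg: "quasi_geodesic L0 C0 UNIV q" using mq unfolding morse_quasi_geodesic_def by blast
  have L0: "1 \<le> L0" using qg unfolding quasi_geodesic_def by auto
  define D0 where "D0 = 4 * (\<bar>MM q 4 1\<bar> + \<bar>L0 * (L0 * (2 * MM q 1 0 + 1 + C0)) + C0 + MM q 1 0\<bar> + 1)"
  have D0: "4 \<le> D0" unfolding D0_def by simp
  have "0 < 1 / (2 * D0) * \<delta>^2 / (32 * L0^4 * D0)" using D0 L0 dl by simp
  thus ?thesis using main_bound[OF cat mq qg dl gm] unfolding D0_def[symmetric] by blast
qed

theorem theorem6p4: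
  fixes q :: "real \<Rightarrow> 'a::metric_space" and \<gamma> \<delta> :: real
  assumes "CAT0_space TYPE('a)"
    and "morse_quasi_geodesic q"
    and "0 < \<delta>" and "\<delta> < 1" and "0 \<le> \<gamma>"
  shows "preceq (\<lambda>x. ereal (x ^ 2)) (Div q \<gamma> \<delta>)"
proof -
  obtain alpha r0 where al: "0 < alpha" and bd: "\<And>r. r0 \<le> r \<Longrightarrow> ereal (alpha * r^2) \<le> Div q \<gamma> \<delta> r"
    using main_bound2[OF assms] by blast
  define C where "C = \<bar>r0\<bar> + 1 + 1 / alpha"
  have C1: "1 \<le> C" unfolding C_def using al by simp
  have Ca: "1 \<le> C * alpha"
  proof -
    have "C * alpha = (\<bar>r0\<bar> + 1) * alpha + 1" unfolding C_def using al by (simp add: field_simps)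
    thus ?thesis using al by simp
  qed
  show ?thesis unfolding preceq_def
  proof (intro exI[of _ C] conjI allI impI)
    show "1 \<le> C" by (rule C1)
    fix x :: real assume x: "0 \<le> x"
    define r where "r = C * x + C"
    have Cx: "0 \<le> C * x" using C1 x by simp
    have "r0 \<le> C" unfolding C_def using al by (simp add: add_increasing2)
    hence rr0: "r0 \<le> r" unfolding r_def using Cx by linarith
    have "1 * x \<le> C * x" using C1 x by (rule mult_right_mono)
    hence xr: "x \<le> r" unfolding r_def using C1 by linarith
    have "x^2 \<le> r^2" using xr x by (intro power_mono) auto
    also have "r^2 \<le> (C * alpha) * r^2" using Ca by (simp add: mult_le_cancel_right1)
    finally have 1: "x^2 \<le> C * (alpha * r^2)" by (simp add: mult.assoc)
    have "ereal (x^2) \<le> ereal C * ereal (alpha * r^2)" using 1 by simp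
    also have "\<dots> \<le> ereal C * Div q \<gamma> \<delta> r" using bd[OF rr0] C1 by (intro ereal_mult_left_mono) auto
    also have "\<dots> \<le> ereal C * Div q \<gamma> \<delta> r + ereal (C * x + C)" using Cx C1
      by (intro add_increasing2) auto
    finally show "ereal (x^2) \<le> ereal C * Div q \<gamma> \<delta> (C * x + C) + ereal (C * x + C)" unfolding r_def .
  qed
qed

end
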